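(* Let $\lambda,\mu\in\mathbb C$ and let $k\in\frac12+\mathbb Z_{\ge0}$ be a half-integer. Identify the principal symbol of $A=F_1\partial_x^{k-1/2}\overline D_1+F_2\partial_x^{k-1/2}\overline D_2+(\text{terms in }\mathcal D^{k-1/2}_{\lambda\mu})\in\mathcal D^k_{\lambda\mu}$ with the pair $(F_1,F_2)$. Then the induced action of $\mathcal K(2)$ on $\operatorname{gr}^k\mathcal D_{\lambda\mu}$ is $$L_{X_f}(F_1,F_2)=\Big(L^{\mu-\lambda-k}_{X_f}(F_1)-\tfrac12\,\overline D_1\overline D_2(f)\,F_2,\ L^{\mu-\lambda-k}_{X_f}(F_2)+\tfrac12\,\overline D_1\overline D_2(f)\,F_1\Big).$$
   Context: $C^\infty(S^{1|2})$ consists of $f=f_0(x)+\xi_1f_1(x)+\xi_2f_2(x)+\xi_1\xi_2f_{12}(x)$ with smooth complex-valued coefficients on the circle and odd Grassmann variables $\xi_1,\xi_2$; parity $p(x)=0,p(\xi_i)=1$; $f'=\partial_xf$. $\overline D_i=\partial_{\xi_i}-\xi_i\partial_x$. For homogeneous $f$, $X_f=f\partial_x-(-1)^{p(f)}\tfrac12(\overline D_1(f)\overline D_1+\overline D_2(f)\overline D_2)$; $\mathcal K(2)$ is the Lie superalgebra of all such $X_f$. $\mathcal F_\lambda$ is $C^\infty(S^{1|2})$ with action $L^\lambda_{X_f}=X_f+\lambda f'$. $\mathcal D_{\lambda\mu}$: linear differential operators $\mathcal F_\lambda\to\mathcal F_\mu$ with action $\mathcal L_{X_f}(A)=L^\mu_{X_f}\circ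 A-(-1)^{p(f)p(A)}A\circ L^\lambda_{X_f}$; each is a finite sum $\sum a_{\ell,m,n}\partial_x^\ell\overline D_1^m\overline D_2^n$, $m,n\in\{0,1\}$. For $k\in\frac12\mathbb Z_{\ge0}$, $\mathcal D^k_{\lambda\mu}$ consists of such sums with $\ell+\frac m2+\frac n2\le k$; it is $\mathcal K(2)$-stable, and $\operatorname{gr}^k\mathcal D_{\lambda\mu}=\mathcal D^k_{\lambda\mu}/\mathcal D^{k-1/2}_{\lambda\mu}$ carries the induced action. $\overline D_1\overline D_2(f)$ denotes $\overline D_1(\overline D_2(f))$. *)

theory Defs
  imports "HOL-Analysis.Analysis"
begin

text \<open>A superfunction f = f0(x) + xi1 f1(x) + xi2 f2(x) + xi1 xi2 f12(x), stored by its
four complex coefficient functions of the real variable x (the circle is R / 2 pi Z;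
smoothness below includes 2 pi periodicity).\<close>

datatype sfun = SF (c0: "real \<Rightarrow> complex") (c1: "real \<Rightarrow> complex")
                   (c2: "real \<Rightarrow> complex") (c12: "real \<Rightarrow> complex")

instantiation sfun :: ab_group_add
begin
definition zero_sfun :: sfun where
  "0 = SF (\<lambda>_. 0) (\<lambda>_. 0) (\<lambda>_. 0) (\<lambda>_. 0)"
definition plus_sfun :: "sfun \<Rightarrow> sfun \<Rightarrow> sfun" where
  "f + g = SF (\<lambda>x. c0 f x + c0 g x) (\<lambda>x. c1 f x + c1 g x)
              (\<lambda>x. c2 f x + c2 g x) (\<lambda>x. c12 f x + c12 g x)"
definition uminus_sfun :: "sfun \<Rightarrow> sfun" where
  "- f = SF (\<lambda>x. - c0 f x) (\<lambda>x. - c1 f x) (\<lambda>x. - c2 f x) (\<lambda>x. - c12 f x)"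
definition minus_sfun :: "sfun \<Rightarrow> sfun \<Rightarrow> sfun" where
  "f - g = SF (\<lambda>x. c0 f x - c0 g x) (\<lambda>x. c1 f x - c1 g x)
              (\<lambda>x. c2 f x - c2 g x) (\<lambda>x. c12 f x - c12 g x)"
instance
  by standard (simp_all add: zero_sfun_def plus_sfun_def uminus_sfun_def minus_sfun_def
                   sfun.expand algebra_simps)
end

text \<open>Grassmann product (xi1, xi2 odd, xi1 xi2 = - xi2 xi1, xi_i^2 = 0).\<close>
definition gmul :: "sfun \<Rightarrow> sfun \<Rightarrow> sfun" (infixl "\<star>" 70) where
  "f \<star> g = SF (\<lambda>x. c0 f x * c0 g x)
              (\<lambda>x. c0 f x * c1 g x + c1 f x * c0 g x)
              (\<lambda>x. c0 f x * c2 g x + c2 f x * c0 g x)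
              (\<lambda>x. c0 f x * c12 g x + c12 f x * c0 g x + c1 f x * c2 g x - c2 f x * c1 g x)"

definition scal :: "complex \<Rightarrow> sfun \<Rightarrow> sfun" where
  "scal c f = SF (\<lambda>x. c * c0 f x) (\<lambda>x. c * c1 f x) (\<lambda>x. c * c2 f x) (\<lambda>x. c * c12 f x)"

definition xi1 :: sfun where "xi1 = SF (\<lambda>_. 0) (\<lambda>_. 1) (\<lambda>_. 0) (\<lambda>_. 0)"
definition xi2 :: sfun where "xi2 = SF (\<lambda>_. 0) (\<lambda>_. 0) (\<lambda>_. 1) (\<lambda>_. 0)"

definition vd :: "(real \<Rightarrow> complex) \<Rightarrow> real \<Rightarrow> complex" where
  "vd \<phi> = (\<lambda>x. vector_derivative \<phi> (at x))"

definition dx :: "sfun \<Rightarrow> sfun" where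
  "dx f = SF (vd (c0 f)) (vd (c1 f)) (vd (c2 f)) (vd (c12 f))"

text \<open>Left partial derivatives in the odd variables:
  d/dxi1 (xi1 xi2 h) = xi2 h,  d/dxi2 (xi1 xi2 h) = - xi1 h.\<close>
definition dxi1 :: "sfun \<Rightarrow> sfun" where
  "dxi1 f = SF (c1 f) (\<lambda>_. 0) (c12 f) (\<lambda>_. 0)"
definition dxi2 :: "sfun \<Rightarrow> sfun" where
  "dxi2 f = SF (c2 f) (\<lambda>x. - c12 f x) (\<lambda>_. 0) (\<lambda>_. 0)"

definition Db1 :: "sfun \<Rightarrow> sfun" where "Db1 f = dxi1 f - xi1 \<star> dx f"
definition Db2 :: "sfun \<Rightarrow> sfun" where "Db2 f = dxi2 f - xi2 \<star> dx f"

definition smooth_circ :: "(real \<Rightarrow> complex) \<Rightarrow> bool" where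
  "smooth_circ \<phi> \<longleftrightarrow> (\<forall>x. \<phi> (x + 2 * pi) = \<phi> x) \<and>
     (\<exists>d. d 0 = \<phi> \<and> (\<forall>j x. (d j has_vector_derivative d (Suc j) x) (at x)))"

definition smooth_sf :: "sfun \<Rightarrow> bool" where
  "smooth_sf f \<longleftrightarrow> smooth_circ (c0 f) \<and> smooth_circ (c1 f) \<and> smooth_circ (c2 f) \<and> smooth_circ (c12 f)"

text \<open>Parity: b = False means even, b = True means odd.\<close>
definition has_parity :: "bool \<Rightarrow> sfun \<Rightarrow> bool" where
  "has_parity b f \<longleftrightarrow> (if b then c0 f = (\<lambda>_. 0) \<and> c12 f = (\<lambda>_. 0)
                               else c1 f = (\<lambda>_. 0) \<and> c2 f = (\<lambda>_. 0))"

definition psign :: "bool \<Rightarrow> complex" where "psign b = (if b then -1 else 1)"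

text \<open>Contact vector field X_f (f homogeneous of parity b) and the action on F_lambda.\<close>
definition Xf :: "bool \<Rightarrow> sfun \<Rightarrow> sfun \<Rightarrow> sfun" where
  "Xf b f g = f \<star> dx g - scal (psign b / 2) (Db1 f \<star> Db1 g + Db2 f \<star> Db2 g)"

definition Lw :: "complex \<Rightarrow> bool \<Rightarrow> sfun \<Rightarrow> sfun \<Rightarrow> sfun" where
  "Lw lam b f g = Xf b f g + scal lam (dx f \<star> g)"

definition ev_part :: "sfun \<Rightarrow> sfun" where "ev_part f = SF (c0 f) (\<lambda>_. 0) (\<lambda>_. 0) (c12 f)"
definition od_part :: "sfun \<Rightarrow> sfun" where "od_part f = SF (\<lambda>_. 0) (c1 f) (c2 f) (\<lambda>_. 0)"

definition op_even :: "(sfun \<Rightarrow> sfun) \<Rightarrow> sfun \<Rightarrow> sfun" where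
  "op_even A g = ev_part (A (ev_part g)) + od_part (A (od_part g))"
definition op_odd :: "(sfun \<Rightarrow> sfun) \<Rightarrow> sfun \<Rightarrow> sfun" where
  "op_odd A g = od_part (A (ev_part g)) + ev_part (A (od_part g))"

text \<open>Action of X_f on operators F_lambda \<rightarrow> F_mu:
  L(A) = L^mu o A - (-1)^{p(f) p(A)} A o L^lambda, extended linearly over the parity
  decomposition A = A_even + A_odd.\<close>
definition Lop :: "complex \<Rightarrow> complex \<Rightarrow> bool \<Rightarrow> sfun \<Rightarrow> (sfun \<Rightarrow> sfun) \<Rightarrow> sfun \<Rightarrow> sfun" where
  "Lop lam mu b f A = (\<lambda>g. Lw mu b f (A g) - op_even A (Lw lam b f g)
                             - scal (psign b) (op_odd A (Lw lam b f g)))"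

text \<open>Differential operators of order \<le> K/2: finite sums of a_{l,m,n} d_x^l Db1^m Db2^n with
  smooth coefficients and 2l + m + n \<le> K (equality required on smooth arguments).\<close>
definition mono_op :: "nat \<Rightarrow> nat \<Rightarrow> nat \<Rightarrow> sfun \<Rightarrow> sfun" where
  "mono_op l m n g = (dx ^^ l) ((Db1 ^^ m) ((Db2 ^^ n) g))"

definition in_D :: "nat \<Rightarrow> (sfun \<Rightarrow> sfun) \<Rightarrow> bool" where
  "in_D K A \<longleftrightarrow> (\<exists>a. (\<forall>l m n. smooth_sf (a l m n)) \<and>
     (\<forall>g. smooth_sf g \<longrightarrow>
        A g = (\<Sum>l\<le>K. \<Sum>m<2. \<Sum>n<2. if 2 * l + m + n \<le> K then a l m n \<star> mono_op l m n g else 0)))"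

end

theory Submission
  imports Defs
begin


fun Sj :: "nat \<Rightarrow> (real \<Rightarrow> complex) \<Rightarrow> bool" where
  "Sj 0 \<phi> = True"
| "Sj (Suc j) \<phi> = ((\<forall>x. \<phi> differentiable (at x)) \<and> Sj j (vd \<phi>))"

definition sm :: "(real \<Rightarrow> complex) \<Rightarrow> bool" where
  "sm \<phi> \<longleftrightarrow> (\<forall>j. Sj j \<phi>) \<and> (\<forall>x. \<phi> (x + 2*pi) = \<phi> x)"

lemma vd_at: "(\<phi> has_vector_derivative D) (at x) \<Longrightarrow> vd \<phi> x = D"
  by (simp add: vd_def vector_derivative_at)

lemma vd_works: "\<phi> differentiable (at x) \<Longrightarrow> (\<phi> has_vector_derivative vd \<phi> x) (at x)"
  by (simp add: vd_def vector_derivative_works[symmetric])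

lemma vd_add': "(\<And>x. a differentiable (at x)) \<Longrightarrow> (\<And>x. b differentiable (at x)) \<Longrightarrow>
   vd (\<lambda>x. a x + b x) = (\<lambda>x. vd a x + vd b x)"
  by (rule ext, rule vd_at, intro has_vector_derivative_add vd_works)

lemma vd_mult': "(\<And>x. a differentiable (at x)) \<Longrightarrow> (\<And>x. b differentiable (at x)) \<Longrightarrow>
   vd (\<lambda>x. a x * b x) = (\<lambda>x. vd a x * b x + a x * vd b x)"
proof (rule ext, rule vd_at)
  fix x assume "\<And>x. a differentiable (at x)" "\<And>x. b differentiable (at x)"
  then have "((\<lambda>x. a x * b x) has_vector_derivative (a x * vd b x + vd a x * b x)) (at x)"
    by (intro has_vector_derivative_mult vd_works)
  then show "((\<lambda>x. a x * b x) has_vector_derivative (vd a x * b x + a x * vd b x)) (at x)"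
    by (simp add: add.commute)
qed

lemma vd_const[simp]: "vd (\<lambda>x. c) = (\<lambda>x. 0)"
  by (rule ext, rule vd_at, simp)

lemma diff_add: fixes a b :: "real \<Rightarrow> complex" assumes "\<And>x. a differentiable (at x)" "\<And>x. b differentiable (at x)" shows
   "(\<lambda>x. a x + b x) differentiable (at x)"
  using has_vector_derivative_add[OF vd_works[OF assms(1)] vd_works[OF assms(2)]] differentiableI_vector by blast

lemma diff_mult: fixes a b :: "real \<Rightarrow> complex" assumes "\<And>x. a differentiable (at x)" "\<And>x. b differentiable (at x)" shows
   "(\<lambda>x. a x * b x) differentiable (at x)"
  using has_vector_derivative_mult[OF vd_works[OF assms(1)] vd_works[OF assms(2)]] differentiableI_vector by blast

lemma Sj_mono: "Sj (Suc j) \<phi> \<Longrightarrow> Sj j \<phi>"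
  by (induction j arbitrary: \<phi>) auto

lemma Sj_const: "Sj j (\<lambda>x. c)"
  by (induction j arbitrary: c) auto

lemma Sj_add: "Sj j a \<Longrightarrow> Sj j b \<Longrightarrow> Sj j (\<lambda>x. a x + b x)"
proof (induction j arbitrary: a b)
  case 0 then show ?case by simp
next
  case (Suc j)
  then show ?case using diff_add[of a b] vd_add'[of a b] by auto
qed

lemma Sj_mult: "Sj j a \<Longrightarrow> Sj j b \<Longrightarrow> Sj j (\<lambda>x. a x * b x)"
proof (induction j arbitrary: a b)
  case 0 then show ?case by simp
next
  case (Suc j)
  have "Sj j (\<lambda>x. vd a x * b x + a x * vd b x)"
    using Suc by (intro Sj_add Suc.IH) (auto intro: Sj_mono)
  then show ?case using Suc diff_mult[of a b] vd_mult'[of a b] by auto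
qed

lemma sm_differentiable: "sm \<phi> \<Longrightarrow> \<phi> differentiable (at x)"
  unfolding sm_def using Sj.simps(2)[of 0 \<phi>] by blast

lemma vd_periodic:
  assumes "\<And>x. \<phi> (x + p) = \<phi> x" "\<And>x. \<phi> differentiable (at x)"
  shows "vd \<phi> (x + p) = vd \<phi> x"
proof -
  have "((\<phi> \<circ> (\<lambda>y. y + p)) has_vector_derivative (1 *\<^sub>R vd \<phi> (x + p))) (at x)"
    by (rule vector_diff_chain_at) (auto intro!: derivative_eq_intros vd_works assms)
  moreover have "\<phi> \<circ> (\<lambda>y. y + p) = \<phi>" using assms(1) by (auto simp: o_def)
  ultimately show ?thesis using vd_at by fastforce
qed

lemma sm_vd: "sm \<phi> \<Longrightarrow> sm (vd \<phi>)"
  unfolding sm_def using Sj.simps(2) vd_periodic by blast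

lemma sm_add: "sm a \<Longrightarrow> sm b \<Longrightarrow> sm (\<lambda>x. a x + b x)"
  unfolding sm_def by (auto intro: Sj_add)
lemma sm_mult: "sm a \<Longrightarrow> sm b \<Longrightarrow> sm (\<lambda>x. a x * b x)"
  unfolding sm_def by (auto intro: Sj_mult)
lemma sm_const: "sm (\<lambda>x. c)"
  unfolding sm_def by (auto intro: Sj_const)
lemma sm_minus: "sm a \<Longrightarrow> sm (\<lambda>x. - a x)"
  using sm_mult[OF sm_const[of "-1"], of a] by simp
lemma sm_sub: "sm a \<Longrightarrow> sm b \<Longrightarrow> sm (\<lambda>x. a x - b x)"
  using sm_add[OF _ sm_minus[of b], of a] by simp

lemma vd_add: "sm a \<Longrightarrow> sm b \<Longrightarrow> vd (\<lambda>x. a x + b x) = (\<lambda>x. vd a x + vd b x)"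
  by (simp add: vd_add' sm_differentiable)
lemma vd_mult: "sm a \<Longrightarrow> sm b \<Longrightarrow> vd (\<lambda>x. a x * b x) = (\<lambda>x. vd a x * b x + a x * vd b x)"
  by (simp add: vd_mult' sm_differentiable)
lemma vd_minus: "sm a \<Longrightarrow> vd (\<lambda>x. - a x) = (\<lambda>x. - vd a x)"
  using vd_mult[OF sm_const[of "-1"], of a] by simp
lemma vd_sub: "sm a \<Longrightarrow> sm b \<Longrightarrow> vd (\<lambda>x. a x - b x) = (\<lambda>x. vd a x - vd b x)"
  using vd_add[OF _ sm_minus[of b], of a] vd_minus[of b] by simp

lemma smooth_circ_sm: "smooth_circ \<phi> \<longleftrightarrow> sm \<phi>"
proof
  assume "smooth_circ \<phi>"
  then obtain d where d: "d 0 = \<phi>" "\<And>j x. (d j has_vector_derivative d (Suc j) x) (at x)"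
    and per: "\<forall>x. \<phi> (x + 2 * pi) = \<phi> x" unfolding smooth_circ_def by blast
  have "Sj j (d i)" for j i
  proof (induction j arbitrary: i)
    case 0 then show ?case by simp
  next
    case (Suc j)
    have "vd (d i) = d (Suc i)" using d(2) vd_at by blast
    then show ?case using Suc d(2) by (auto intro: differentiableI_vector)
  qed
  then show "sm \<phi>" using d per unfolding sm_def by auto
next
  assume s: "sm \<phi>"
  have sj: "sm ((vd ^^ j) \<phi>)" for j by (induction j) (auto simp: s sm_vd)
  show "smooth_circ \<phi>" unfolding smooth_circ_def
  proof (intro conjI exI[of _ "\<lambda>j. (vd ^^ j) \<phi>"] allI)
    show "\<phi> (x + 2 * pi) = \<phi> x" for x using s unfolding sm_def by auto
    show "((vd ^^ j) \<phi> has_vector_derivative (vd ^^ Suc j) \<phi> x) (at x)" for j x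
      using vd_works[OF sm_differentiable[OF sj[of j]]] by simp
  qed simp
qed



definition sone :: sfun where "sone = SF (\<lambda>_. 1) (\<lambda>_. 0) (\<lambda>_. 0) (\<lambda>_. 0)"
definition sinv :: "sfun \<Rightarrow> sfun" where
  "sinv f = SF (c0 f) (\<lambda>x. - c1 f x) (\<lambda>x. - c2 f x) (c12 f)"

lemma sms_SF[simp]: "smooth_sf (SF a b c d) \<longleftrightarrow> sm a \<and> sm b \<and> sm c \<and> sm d"
  by (simp add: smooth_sf_def smooth_circ_sm)
lemma sms_c[simp]: "smooth_sf f \<Longrightarrow> sm (c0 f)" "smooth_sf f \<Longrightarrow> sm (c1 f)"
   "smooth_sf f \<Longrightarrow> sm (c2 f)" "smooth_sf f \<Longrightarrow> sm (c12 f)"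
  by (simp_all add: smooth_sf_def smooth_circ_sm)

lemmas smr[simp] = sm_add sm_mult sm_const sm_minus sm_sub sm_vd
lemmas vdr[simp] = vd_add vd_mult vd_minus vd_sub

lemmas sdefs = zero_sfun_def plus_sfun_def uminus_sfun_def minus_sfun_def gmul_def scal_def
  xi1_def xi2_def dx_def dxi1_def dxi2_def Db1_def Db2_def ev_part_def od_part_def sone_def
  sinv_def

lemma sfun_eqI: "c0 f = c0 g \<Longrightarrow> c1 f = c1 g \<Longrightarrow> c2 f = c2 g \<Longrightarrow> c12 f = c12 g \<Longrightarrow> f = g"
  by (simp add: sfun.expand)

lemma sms_ops[simp]:
  "smooth_sf 0" "smooth_sf sone" "smooth_sf xi1" "smooth_sf xi2"
  "smooth_sf f \<Longrightarrow> smooth_sf g \<Longrightarrow> smooth_sf (f + g)"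
  "smooth_sf f \<Longrightarrow> smooth_sf g \<Longrightarrow> smooth_sf (f - g)"
  "smooth_sf f \<Longrightarrow> smooth_sf (- f)"
  "smooth_sf f \<Longrightarrow> smooth_sf g \<Longrightarrow> smooth_sf (f \<star> g)"
  "smooth_sf f \<Longrightarrow> smooth_sf (scal c f)"
  "smooth_sf f \<Longrightarrow> smooth_sf (dx f)"
  "smooth_sf f \<Longrightarrow> smooth_sf (Db1 f)"
  "smooth_sf f \<Longrightarrow> smooth_sf (Db2 f)"
  "smooth_sf f \<Longrightarrow> smooth_sf (ev_part f)"
  "smooth_sf f \<Longrightarrow> smooth_sf (od_part f)"
  "smooth_sf f \<Longrightarrow> smooth_sf (sinv f)"
  by (simp_all add: sdefs)

lemma sms_dxpow[simp]: "smooth_sf f \<Longrightarrow> smooth_sf ((dx ^^ l) f)"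
  by (induction l) auto
lemma sms_Db1pow[simp]: "smooth_sf f \<Longrightarrow> smooth_sf ((Db1 ^^ l) f)"
  by (induction l) auto
lemma sms_Db2pow[simp]: "smooth_sf f \<Longrightarrow> smooth_sf ((Db2 ^^ l) f)"
  by (induction l) auto
lemma sms_mono[simp]: "smooth_sf f \<Longrightarrow> smooth_sf (mono_op l m n f)"
  by (simp add: mono_op_def)

lemma gm_assoc: "(f \<star> g) \<star> h = f \<star> (g \<star> h)"
  by (simp add: sdefs algebra_simps)
lemma gm_distrib:
  "(f + g) \<star> h = f \<star> h + g \<star> h" "h \<star> (f + g) = h \<star> f + h \<star> g"
  "(f - g) \<star> h = f \<star> h - g \<star> h" "h \<star> (f - g) = h \<star> f - h \<star> g"
  "(- f) \<star> h = - (f \<star> h)" "h \<star> (- f) = - (h \<star> f)"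
  by (simp_all add: sdefs algebra_simps)
lemma gm_zero[simp]: "0 \<star> f = 0" "f \<star> 0 = 0"
  by (simp_all add: sdefs)
lemma gm_one[simp]: "sone \<star> f = f" "f \<star> sone = f"
  by (simp_all add: sdefs)
lemma gm_scal: "scal c f \<star> g = scal c (f \<star> g)" "f \<star> scal c g = scal c (f \<star> g)"
  by (simp_all add: sdefs algebra_simps)
lemma scal_distrib: "scal c (f + g) = scal c f + scal c g" "scal c (f - g) = scal c f - scal c g"
  "scal (c + d) f = scal c f + scal d f" "scal (c * d) f = scal c (scal d f)"
  "scal c (- f) = - scal c f"
  by (simp_all add: sdefs algebra_simps)
lemma scal_simps[simp]: "scal 1 f = f" "scal 0 f = 0" "scal c 0 = 0" "scal (-1) f = - f"
  by (simp_all add: sdefs)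

lemma dx_rules:
  "dx 0 = 0"
  "smooth_sf f \<Longrightarrow> smooth_sf g \<Longrightarrow> dx (f + g) = dx f + dx g"
  "smooth_sf f \<Longrightarrow> smooth_sf g \<Longrightarrow> dx (f - g) = dx f - dx g"
  "smooth_sf f \<Longrightarrow> dx (- f) = - dx f"
  "smooth_sf f \<Longrightarrow> dx (scal c f) = scal c (dx f)"
  "smooth_sf f \<Longrightarrow> smooth_sf g \<Longrightarrow> dx (f \<star> g) = dx f \<star> g + f \<star> dx g"
  by (simp_all add: sdefs algebra_simps)

lemma Db_rules:
  "Db1 0 = 0" "Db2 0 = 0"
  "smooth_sf f \<Longrightarrow> smooth_sf g \<Longrightarrow> Db1 (f + g) = Db1 f + Db1 g"
  "smooth_sf f \<Longrightarrow> smooth_sf g \<Longrightarrow> Db1 (f - g) = Db1 f - Db1 g"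
  "smooth_sf f \<Longrightarrow> Db1 (- f) = - Db1 f"
  "smooth_sf f \<Longrightarrow> Db1 (scal c f) = scal c (Db1 f)"
  "smooth_sf f \<Longrightarrow> smooth_sf g \<Longrightarrow> Db1 (f \<star> g) = Db1 f \<star> g + sinv f \<star> Db1 g"
  "smooth_sf f \<Longrightarrow> smooth_sf g \<Longrightarrow> Db2 (f + g) = Db2 f + Db2 g"
  "smooth_sf f \<Longrightarrow> smooth_sf g \<Longrightarrow> Db2 (f - g) = Db2 f - Db2 g"
  "smooth_sf f \<Longrightarrow> Db2 (- f) = - Db2 f"
  "smooth_sf f \<Longrightarrow> Db2 (scal c f) = scal c (Db2 f)"
  "smooth_sf f \<Longrightarrow> smooth_sf g \<Longrightarrow> Db2 (f \<star> g) = Db2 f \<star> g + sinv f \<star> Db2 g"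
  by (simp_all add: sdefs algebra_simps fun_eq_iff)

lemma Db_sq:
  "smooth_sf f \<Longrightarrow> Db1 (Db1 f) = - dx f"
  "smooth_sf f \<Longrightarrow> Db2 (Db2 f) = - dx f"
  "smooth_sf f \<Longrightarrow> Db2 (Db1 f) = - Db1 (Db2 f)"
  "smooth_sf f \<Longrightarrow> dx (Db1 f) = Db1 (dx f)"
  "smooth_sf f \<Longrightarrow> dx (Db2 f) = Db2 (dx f)"
  by (simp_all add: sdefs algebra_simps)

lemma inv_rules:
  "sinv (sinv f) = f" "sinv 0 = 0" "sinv (f + g) = sinv f + sinv g" "sinv (f - g) = sinv f - sinv g"
  "sinv (- f) = - sinv f" "sinv (scal c f) = scal c (sinv f)" "sinv (f \<star> g) = sinv f \<star> sinv g"
  "smooth_sf f \<Longrightarrow> sinv (dx f) = dx (sinv f)" "smooth_sf f \<Longrightarrow> sinv (Db1 f) = - Db1 (sinv f)"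
  "smooth_sf f \<Longrightarrow> sinv (Db2 f) = - Db2 (sinv f)"
  by (simp_all add: sdefs algebra_simps)



lemma sms_sum[simp]: "(\<And>i. i \<in> I \<Longrightarrow> smooth_sf (h i)) \<Longrightarrow> smooth_sf (sum h I)"
  by (induction I rule: infinite_finite_induct) auto

lemma sms_if[simp]: "smooth_sf x \<Longrightarrow> smooth_sf (if P then x else 0)"
  by auto

lemma scal_sum: "scal c (sum h I) = (\<Sum>i\<in>I. scal c (h i))"
  by (induction I rule: infinite_finite_induct) (auto simp: scal_distrib)

lemma gm_sum_right: "c \<star> sum h I = (\<Sum>i\<in>I. c \<star> h i)"
  by (induction I rule: infinite_finite_induct) (auto simp: gm_distrib)

lemma add_sum_hom:
  assumes "\<And>x y. smooth_sf x \<Longrightarrow> smooth_sf y \<Longrightarrow> \<Phi> (x + y) = \<Phi> x + \<Phi> y" "\<Phi> 0 = 0"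
    and "finite I" "\<And>i. i \<in> I \<Longrightarrow> smooth_sf (h i)"
  shows "\<Phi> (sum h I) = (\<Sum>i\<in>I. \<Phi> (h i))"
  using assms(3,4) by (induction I rule: finite_induct) (auto simp: assms(1,2))

definition DS :: "nat \<Rightarrow> (nat \<Rightarrow> nat \<Rightarrow> nat \<Rightarrow> sfun) \<Rightarrow> sfun \<Rightarrow> sfun" where
  "DS K a g = (\<Sum>l\<le>K. \<Sum>m<2. \<Sum>n<2. if 2 * l + m + n \<le> K then a l m n \<star> mono_op l m n g else 0)"

lemma in_D_alt: "in_D K A \<longleftrightarrow> (\<exists>a. (\<forall>l m n. smooth_sf (a l m n)) \<and> (\<forall>g. smooth_sf g \<longrightarrow> A g = DS K a g))"
  by (simp add: in_D_def DS_def)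

lemma in_D_cong: "in_D K A \<Longrightarrow> (\<And>g. smooth_sf g \<Longrightarrow> A g = B g) \<Longrightarrow> in_D K B"
  unfolding in_D_alt by (elim exE conjE) (rule exI, rule conjI, assumption, simp)

lemma sms_DS[simp]: "(\<And>l m n. smooth_sf (a l m n)) \<Longrightarrow> smooth_sf g \<Longrightarrow> smooth_sf (DS K a g)"
  by (simp add: DS_def)

lemma in_D_smooth: "in_D K A \<Longrightarrow> smooth_sf g \<Longrightarrow> smooth_sf (A g)"
  unfolding in_D_alt by auto

lemma in_D_zero: "in_D K (\<lambda>g. 0)"
proof -
  have "(\<Sum>l\<le>K. \<Sum>m<2. \<Sum>n<2. if 2 * l + m + n \<le> K then (0::sfun) \<star> mono_op l m n g else 0) = 0" for g
    by (simp cong: if_cong)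
  then show ?thesis unfolding in_D_def by (intro exI[of _ "\<lambda>_ _ _. 0"]) simp
qed

lemma in_D_add:
  assumes "in_D K A" "in_D K B" shows "in_D K (\<lambda>g. A g + B g)"
proof -
  obtain a where a: "\<forall>l m n. smooth_sf (a l m n)" "\<forall>g. smooth_sf g \<longrightarrow> A g = DS K a g"
    using assms(1) unfolding in_D_alt by blast
  obtain b where b: "\<forall>l m n. smooth_sf (b l m n)" "\<forall>g. smooth_sf g \<longrightarrow> B g = DS K b g"
    using assms(2) unfolding in_D_alt by blast
  show ?thesis unfolding in_D_alt
  proof (intro exI[of _ "\<lambda>l m n. a l m n + b l m n"] conjI allI impI)
    show "smooth_sf (a l m n + b l m n)" for l m n using a b by simp
    fix g assume "smooth_sf g"
    then show "A g + B g = DS K (\<lambda>l m n. a l m n + b l m n) g"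
      using a b by (simp add: DS_def gm_distrib sum.distrib[symmetric] if_distrib)
         (intro sum.cong refl, auto simp: gm_distrib)
  qed
qed

lemma in_D_lmul:
  assumes "in_D K A" "smooth_sf c" shows "in_D K (\<lambda>g. c \<star> A g)"
proof -
  obtain a where a: "\<forall>l m n. smooth_sf (a l m n)" "\<forall>g. smooth_sf g \<longrightarrow> A g = DS K a g"
    using assms(1) unfolding in_D_alt by blast
  show ?thesis unfolding in_D_alt
  proof (intro exI[of _ "\<lambda>l m n. c \<star> a l m n"] conjI allI impI)
    show "smooth_sf (c \<star> a l m n)" for l m n using a assms by simp
    fix g assume "smooth_sf g"
    then show "c \<star> A g = DS K (\<lambda>l m n. c \<star> a l m n) g"
      using a by (simp add: DS_def gm_sum_right gm_assoc if_distrib cong: if_cong)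
  qed
qed

lemma in_D_scal:
  assumes "in_D K A" shows "in_D K (\<lambda>g. scal c (A g))"
proof -
  obtain a where a: "\<forall>l m n. smooth_sf (a l m n)" "\<forall>g. smooth_sf g \<longrightarrow> A g = DS K a g"
    using assms(1) unfolding in_D_alt by blast
  show ?thesis unfolding in_D_alt
  proof (intro exI[of _ "\<lambda>l m n. scal c (a l m n)"] conjI allI impI)
    show "smooth_sf (scal c (a l m n))" for l m n using a assms by simp
    fix g assume "smooth_sf g"
    then show "scal c (A g) = DS K (\<lambda>l m n. scal c (a l m n)) g"
      using a by (simp add: DS_def scal_sum gm_scal if_distrib cong: if_cong)
  qed
qed

lemma in_D_uminus: "in_D K A \<Longrightarrow> in_D K (\<lambda>g. - A g)"
  using in_D_scal[of K A "-1"] by simp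

lemma in_D_diff: "in_D K A \<Longrightarrow> in_D K B \<Longrightarrow> in_D K (\<lambda>g. A g - B g)"
  using in_D_add[OF _ in_D_uminus, of K A B] by simp

lemma in_D_sum: "finite I \<Longrightarrow> (\<And>i. i \<in> I \<Longrightarrow> in_D K (T i)) \<Longrightarrow> in_D K (\<lambda>g. \<Sum>i\<in>I. T i g)"
  by (induction I rule: finite_induct) (auto intro: in_D_zero in_D_add)

lemma in_D_if: "(P \<Longrightarrow> in_D K A) \<Longrightarrow> in_D K (\<lambda>g. if P then A g else 0)"
  by (cases P) (auto intro: in_D_zero)

lemma in_D_mono:
  assumes "in_D K A" "K \<le> K'" shows "in_D K' A"
proof -
  obtain a where a: "\<forall>l m n. smooth_sf (a l m n)" "\<forall>g. smooth_sf g \<longrightarrow> A g = DS K a g"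
    using assms(1) unfolding in_D_alt by blast
  show ?thesis unfolding in_D_alt
  proof (intro exI[of _ "\<lambda>l m n. if 2 * l + m + n \<le> K then a l m n else 0"] conjI allI impI)
    show "smooth_sf (if 2 * l + m + n \<le> K then a l m n else 0)" for l m n using a by simp
    fix g assume g: "smooth_sf g"
    have "DS K' (\<lambda>l m n. if 2 * l + m + n \<le> K then a l m n else 0) g
       = (\<Sum>l\<le>K'. \<Sum>m<2. \<Sum>n<2. if 2 * l + m + n \<le> K then a l m n \<star> mono_op l m n g else 0)"
      unfolding DS_def using assms(2) by (intro sum.cong refl) auto
    also have "\<dots> = (\<Sum>l\<le>K. \<Sum>m<2. \<Sum>n<2. if 2 * l + m + n \<le> K then a l m n \<star> mono_op l m n g else 0)"
      using assms(2) by (intro sum.mono_neutral_right) auto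
    finally show "A g = DS K' (\<lambda>l m n. if 2 * l + m + n \<le> K then a l m n else 0) g"
      using a g by (simp add: DS_def)
  qed
qed

lemma in_D_monomial:
  assumes "m < 2" "n < 2" "2 * l + m + n \<le> K" "smooth_sf c"
  shows "in_D K (\<lambda>g. c \<star> mono_op l m n g)"
  unfolding in_D_alt
proof (intro exI[of _ "\<lambda>l' m' n'. if l' = l \<and> m' = m \<and> n' = n then c else 0"] conjI allI impI)
  show "smooth_sf (if l' = l \<and> m' = m \<and> n' = n then c else 0)" for l' m' n' using assms by simp
  fix g assume g: "smooth_sf g"
  have mn: "m = 0 \<or> m = 1" "n = 0 \<or> n = 1" using assms(1,2) by auto
  have l: "l \<le> K" using assms(3) by auto
  have inner: "(\<Sum>m'<2. \<Sum>n'<2. if 2 * l' + m' + n' \<le> K then (if l' = l \<and> m' = m \<and> n' = n then c else 0) \<star> mono_op l' m' n' g else 0)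
      = (if l' = l then c \<star> mono_op l m n g else 0)" for l'
    using mn assms(3) by (auto simp: numeral_2_eq_2 lessThan_Suc)
  have "DS K (\<lambda>l' m' n'. if l' = l \<and> m' = m \<and> n' = n then c else 0) g
     = (\<Sum>l'\<le>K. if l' = l then c \<star> mono_op l m n g else 0)"
    unfolding DS_def inner ..
  also have "\<dots> = c \<star> mono_op l m n g"
    using l by (subst sum.delta) auto
  finally show "c \<star> mono_op l m n g = DS K (\<lambda>l' m' n'. if l' = l \<and> m' = m \<and> n' = n then c else 0) g" ..
qed

lemma in_D_core:
  assumes A: "in_D K A" and Psi: "\<And>g. smooth_sf g \<Longrightarrow> smooth_sf (\<Psi> g)"
    and add: "\<And>x y. smooth_sf x \<Longrightarrow> smooth_sf y \<Longrightarrow> \<Phi> (x + y) = \<Phi> x + \<Phi> y" and zero: "\<Phi> 0 = 0"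
    and mon: "\<And>l m n c. m < 2 \<Longrightarrow> n < 2 \<Longrightarrow> 2 * l + m + n \<le> K \<Longrightarrow> smooth_sf c \<Longrightarrow>
                 in_D K' (\<lambda>g. \<Phi> (c \<star> mono_op l m n (\<Psi> g)))"
  shows "in_D K' (\<lambda>g. \<Phi> (A (\<Psi> g)))"
proof -
  obtain a where a: "\<forall>l m n. smooth_sf (a l m n)" "\<forall>g. smooth_sf g \<longrightarrow> A g = DS K a g"
    using A unfolding in_D_alt by blast
  have eq: "\<Phi> (A (\<Psi> g)) = (\<Sum>l\<le>K. \<Sum>m<2. \<Sum>n<2. if 2 * l + m + n \<le> K then \<Phi> (a l m n \<star> mono_op l m n (\<Psi> g)) else 0)"
    if g: "smooth_sf g" for g
  proof -
    have sg: "smooth_sf (\<Psi> g)" using Psi g .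
    have "\<Phi> (A (\<Psi> g)) = \<Phi> (DS K a (\<Psi> g))" using a sg by simp
    also have "\<dots> = (\<Sum>l\<le>K. \<Phi> (\<Sum>m<2. \<Sum>n<2. if 2 * l + m + n \<le> K then a l m n \<star> mono_op l m n (\<Psi> g) else 0))"
      unfolding DS_def by (rule add_sum_hom[OF add zero]) (use a sg in auto)
    also have "\<dots> = (\<Sum>l\<le>K. \<Sum>m<2. \<Phi> (\<Sum>n<2. if 2 * l + m + n \<le> K then a l m n \<star> mono_op l m n (\<Psi> g) else 0))"
      by (intro sum.cong refl add_sum_hom[OF add zero]) (use a sg in auto)
    also have "\<dots> = (\<Sum>l\<le>K. \<Sum>m<2. \<Sum>n<2. \<Phi> (if 2 * l + m + n \<le> K then a l m n \<star> mono_op l m n (\<Psi> g) else 0))"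
      by (intro sum.cong refl add_sum_hom[OF add zero]) (use a sg in auto)
    finally show ?thesis by (simp add: if_distrib zero cong: if_cong)
  qed
  show ?thesis
    by (rule in_D_cong[OF _ eq[symmetric]], (intro in_D_sum in_D_if mon; (use a in auto)?), simp)
qed



lemma mono_Suc: "mono_op (Suc l) m n g = dx (mono_op l m n g)"
  by (simp add: mono_op_def)

lemma dxpow_Db1: "smooth_sf h \<Longrightarrow> (dx ^^ l) (Db1 h) = Db1 ((dx ^^ l) h)"
  by (induction l) (auto simp: Db_sq)
lemma dxpow_Db2: "smooth_sf h \<Longrightarrow> (dx ^^ l) (Db2 h) = Db2 ((dx ^^ l) h)"
  by (induction l) (auto simp: Db_sq)
lemma dxpow_minus: "smooth_sf h \<Longrightarrow> (dx ^^ l) (- h) = - (dx ^^ l) h"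
  by (induction l) (auto simp: dx_rules)
lemma dxpow_dx: "(dx ^^ l) (dx h) = (dx ^^ Suc l) h"
  by (simp only: funpow_Suc_right o_def)

lemma dx_dxpow: "dx ((dx ^^ l) h) = (dx ^^ l) (dx h)"
  by (simp add: funpow_swap1)

lemma less2: "m < (2::nat) \<Longrightarrow> m = 0 \<or> m = 1" by auto

lemma Db1_mono: "smooth_sf g \<Longrightarrow> m < 2 \<Longrightarrow>
  Db1 (mono_op l m n g) = (if m = 0 then mono_op l 1 n g else - mono_op (Suc l) 0 n g)"
  by (drule less2, elim disjE)
     (simp_all add: mono_op_def dxpow_Db1[symmetric] Db_sq dxpow_minus dx_dxpow)

lemma Db2_mono: "smooth_sf g \<Longrightarrow> m < 2 \<Longrightarrow> n < 2 \<Longrightarrow>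
  Db2 (mono_op l m n g) = (if m = 0 then (if n = 0 then mono_op l 0 1 g else - mono_op (Suc l) 0 0 g)
                           else (if n = 0 then - mono_op l 1 1 g else mono_op (Suc l) 1 0 g))"
  by (drule less2, drule less2, elim disjE)
     (simp_all add: mono_op_def dxpow_Db2[symmetric] Db_sq dxpow_minus Db_rules dx_dxpow)

lemma in_D_mon1: "m < 2 \<Longrightarrow> n < 2 \<Longrightarrow> 2 * l + m + n \<le> K \<Longrightarrow> in_D K (mono_op l m n)"
  using in_D_monomial[of m n l K sone] by simp

lemma mono_simple: "mono_op 0 0 0 = (\<lambda>g. g)" "mono_op (Suc 0) 0 0 = dx" "mono_op 0 (Suc 0) 0 = Db1" "mono_op 0 0 (Suc 0) = Db2"
  by (auto simp: mono_op_def)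

lemma in_D_id: "in_D 0 (\<lambda>g. g)"
  using in_D_mon1[of 0 0 0 0] by (simp add: mono_simple)
lemma in_D_mul: "smooth_sf c \<Longrightarrow> in_D K (\<lambda>g. c \<star> g)"
  using in_D_monomial[of 0 0 0 K c] by (simp add: mono_op_def)
lemma in_D_dx: "2 \<le> K \<Longrightarrow> in_D K dx"
  using in_D_mon1[of 0 0 1 "K"] by (simp add: mono_simple)
lemma in_D_Db1: "1 \<le> K \<Longrightarrow> in_D K Db1"
  using in_D_mon1[of 1 0 0 K] by (simp add: mono_simple)
lemma in_D_Db2: "1 \<le> K \<Longrightarrow> in_D K Db2"
  using in_D_mon1[of 0 1 0 K] by (simp add: mono_simple)

lemma lcomp_dx: assumes "in_D K A" shows "in_D (K + 2) (\<lambda>g. dx (A g))"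
  using in_D_core[OF assms, of "\<lambda>g. g" dx]
proof -
  have "in_D (K + 2) (\<lambda>g. dx (c \<star> mono_op l m n g))"
    if "m < 2" "n < 2" "2 * l + m + n \<le> K" "smooth_sf c" for l m n c
  proof (rule in_D_cong)
    show "in_D (K + 2) (\<lambda>g. dx c \<star> mono_op l m n g + c \<star> mono_op (Suc l) m n g)"
      using that by (intro in_D_add in_D_monomial) auto
  qed (use that in \<open>simp add: dx_rules mono_Suc\<close>)
  then show ?thesis using in_D_core[OF assms, of "\<lambda>g. g" dx] by (simp add: dx_rules)
qed

lemma lcomp_Db1: assumes "in_D K A" shows "in_D (K + 1) (\<lambda>g. Db1 (A g))"
proof -
  have "in_D (K + 1) (\<lambda>g. Db1 (c \<star> mono_op l m n g))"
    if "m < 2" "n < 2" "2 * l + m + n \<le> K" "smooth_sf c" for l m n c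
  proof (cases "m = 0")
    case True
    show ?thesis
    proof (rule in_D_cong)
      show "in_D (K + 1) (\<lambda>g. Db1 c \<star> mono_op l m n g + sinv c \<star> mono_op l 1 n g)"
        using that True by (intro in_D_add in_D_monomial) auto
    qed (use that True in \<open>simp add: Db_rules Db1_mono\<close>)
  next
    case False
    show ?thesis
    proof (rule in_D_cong)
      show "in_D (K + 1) (\<lambda>g. Db1 c \<star> mono_op l m n g - sinv c \<star> mono_op (Suc l) 0 n g)"
        using that False by (intro in_D_diff in_D_monomial) auto
    qed (use that False in \<open>simp add: Db_rules Db1_mono gm_distrib\<close>)
  qed
  then show ?thesis using in_D_core[OF assms, of "\<lambda>g. g" Db1] by (simp add: Db_rules)
qed

lemma lcomp_Db2: assumes "in_D K A" shows "in_D (K + 1) (\<lambda>g. Db2 (A g))"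
proof -
  have "in_D (K + 1) (\<lambda>g. Db2 (c \<star> mono_op l m n g))"
    if "m < 2" "n < 2" "2 * l + m + n \<le> K" "smooth_sf c" for l m n c
  proof -
    have e: "Db2 (c \<star> mono_op l m n g) = Db2 c \<star> mono_op l m n g + sinv c \<star> Db2 (mono_op l m n g)"
      if "smooth_sf g" for g using that \<open>smooth_sf c\<close> by (simp add: Db_rules)
    have h: "in_D (K + 1) (\<lambda>g. sinv c \<star> Db2 (mono_op l m n g))"
    proof -
      consider "m = 0" "n = 0" | "m = 0" "n = 1" | "m = 1" "n = 0" | "m = 1" "n = 1"
        using less2[of m] less2[of n] \<open>m < 2\<close> \<open>n < 2\<close> by blast
      then show ?thesis
      proof cases
        case 1 show ?thesis
          by (rule in_D_cong[OF in_D_monomial[of 0 1 l "K+1" "sinv c"]]) (use that 1 in \<open>simp_all add: Db2_mono\<close>)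
      next
        case 2 show ?thesis
          by (rule in_D_cong[OF in_D_uminus[OF in_D_monomial[of 0 0 "Suc l" "K+1" "sinv c"]]])
             (use that 2 in \<open>simp_all add: Db2_mono gm_distrib\<close>)
      next
        case 3 show ?thesis
          by (rule in_D_cong[OF in_D_uminus[OF in_D_monomial[of 1 1 l "K+1" "sinv c"]]])
             (use that 3 in \<open>simp_all add: Db2_mono gm_distrib\<close>)
      next
        case 4 show ?thesis
          by (rule in_D_cong[OF in_D_monomial[of 1 0 "Suc l" "K+1" "sinv c"]])
             (use that 4 in \<open>simp_all add: Db2_mono gm_distrib\<close>)
      qed
    qed
    show ?thesis
      by (rule in_D_cong[OF in_D_add[OF in_D_monomial[of m n l "K+1" "Db2 c"] h]]) (use that in \<open>simp_all add: e\<close>)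
  qed
  then show ?thesis using in_D_core[OF assms, of "\<lambda>g. g" Db2] by (simp add: Db_rules)
qed

lemma lcomp_dxpow: "in_D K A \<Longrightarrow> in_D (K + 2 * l) (\<lambda>g. (dx ^^ l) (A g))"
proof (induction l)
  case 0 then show ?case by simp
next
  case (Suc l)
  then show ?case using lcomp_dx[OF Suc.IH[OF Suc.prems]] by (simp add: add.assoc)
qed

lemma lcomp_Db1pow: "in_D K A \<Longrightarrow> in_D (K + m) (\<lambda>g. (Db1 ^^ m) (A g))"
proof (induction m)
  case 0 then show ?case by simp
next
  case (Suc m)
  then show ?case using lcomp_Db1[OF Suc.IH[OF Suc.prems]] by simp
qed

lemma lcomp_Db2pow: "in_D K A \<Longrightarrow> in_D (K + m) (\<lambda>g. (Db2 ^^ m) (A g))"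
proof (induction m)
  case 0 then show ?case by simp
next
  case (Suc m)
  then show ?case using lcomp_Db2[OF Suc.IH[OF Suc.prems]] by simp
qed

lemma lcomp_mono: "in_D K A \<Longrightarrow> in_D (K + 2 * l + m + n) (\<lambda>g. mono_op l m n (A g))"
proof -
  assume A: "in_D K A"
  have "in_D (K + n) (\<lambda>g. (Db2^^n) (A g))" by (rule lcomp_Db2pow[OF A])
  then have "in_D (K + n + m) (\<lambda>g. (Db1^^m) ((Db2^^n) (A g)))" by (rule lcomp_Db1pow)
  then have "in_D (K + n + m + 2 * l) (\<lambda>g. (dx^^l) ((Db1^^m) ((Db2^^n) (A g))))" by (rule lcomp_dxpow)
  then show ?thesis unfolding mono_op_def by (simp add: algebra_simps)
qed

lemma in_D_comp:
  assumes R: "in_D K1 R" and M: "in_D K2 M" shows "in_D (K1 + K2) (\<lambda>g. R (M g))"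
proof -
  have "in_D (K1 + K2) (\<lambda>g. c \<star> mono_op l m n (M g))"
    if "2 * l + m + n \<le> K1" "smooth_sf c" for l m n c
    using in_D_mono[OF in_D_lmul[OF lcomp_mono[OF M, of l m n] that(2)]] that(1) by simp
  then show ?thesis using in_D_core[OF R, of M "\<lambda>x. x"] in_D_smooth[OF M] by simp
qed



definition cb :: "bool \<Rightarrow> sfun \<Rightarrow> sfun" where "cb b c = (if b then sinv c else c)"

lemma sm_divc[simp]: "sm a \<Longrightarrow> sm (\<lambda>x. a x / c)"
  using sm_mult[OF _ sm_const[of "1/c"], of a] by simp
lemma vd_divc[simp]: "sm a \<Longrightarrow> vd (\<lambda>x. a x / c) = (\<lambda>x. vd a x / c)"
  using vd_mult[OF _ sm_const[of "1/c"], of a] by simp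

lemma has_parity_SF: "has_parity b f \<Longrightarrow>
   (b \<and> f = SF (\<lambda>_. 0) (c1 f) (c2 f) (\<lambda>_. 0)) \<or> (\<not> b \<and> f = SF (c0 f) (\<lambda>_. 0) (\<lambda>_. 0) (c12 f))"
  unfolding has_parity_def by (cases b) (auto simp: sfun.expand)

lemma psign_sq[simp]: "psign b * psign b = 1" by (simp add: psign_def)

lemma par_cases: "has_parity b f \<Longrightarrow> (b \<Longrightarrow> c0 f = (\<lambda>_. 0) \<Longrightarrow> c12 f = (\<lambda>_. 0) \<Longrightarrow> P) \<Longrightarrow>
   (\<not> b \<Longrightarrow> c1 f = (\<lambda>_. 0) \<Longrightarrow> c2 f = (\<lambda>_. 0) \<Longrightarrow> P) \<Longrightarrow> P"
  unfolding has_parity_def by (cases b) auto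

lemma Xf_dx:
  assumes "smooth_sf f" "smooth_sf h"
  shows "dx (Xf b f h) = Xf b f (dx h) + Xf b (dx f) h"
  using assms by (simp add: Xf_def psign_def sdefs algebra_simps fun_eq_iff add_divide_distrib diff_divide_distrib)

lemma Xf_Db1:
  assumes "smooth_sf f" "smooth_sf h" "has_parity b f"
  shows "Db1 (Xf b f h) = scal (psign b) (Xf b f (Db1 h))
     + scal (psign b) (scal (1/2) (dx f \<star> Db1 h) - scal (1/2) (Db1 (Db2 f) \<star> Db2 h))"
proof -
  obtain p q where "(b \<and> f = SF (\<lambda>_. 0) p q (\<lambda>_. 0)) \<or> (\<not> b \<and> f = SF p (\<lambda>_. 0) (\<lambda>_. 0) q)"
    and pq: "sm p" "sm q"
    using has_parity_SF[OF assms(3)] assms(1) by (metis sfun.sel sms_c)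
  then show ?thesis using assms(2) by (elim disjE conjE) (simp_all add: Xf_def psign_def sdefs algebra_simps fun_eq_iff add_divide_distrib diff_divide_distrib)
qed

lemma parity_cases:
  assumes "has_parity b f" "smooth_sf f"
  obtains p q where "sm p" "sm q" "b" "f = SF (\<lambda>_. 0) p q (\<lambda>_. 0)"
  | p q where "sm p" "sm q" "\<not> b" "f = SF p (\<lambda>_. 0) (\<lambda>_. 0) q"
  using has_parity_SF[OF assms(1)] assms(2) by (metis sfun.sel sms_c)

lemma Xf_Db2:
  assumes "smooth_sf f" "smooth_sf h" "has_parity b f"
  shows "Db2 (Xf b f h) = scal (psign b) (Xf b f (Db2 h))
     + scal (psign b) (scal (1/2) (dx f \<star> Db2 h) + scal (1/2) (Db1 (Db2 f) \<star> Db1 h))"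
  using assms(3,1) by (rule parity_cases)
    (use assms(2) in \<open>simp_all add: Xf_def psign_def sdefs algebra_simps fun_eq_iff add_divide_distrib diff_divide_distrib\<close>)

lemma Lw_gmul:
  assumes "smooth_sf f" "smooth_sf c" "smooth_sf h" "has_parity b f"
  shows "Lw mu b f (c \<star> h) = Lw mu b f c \<star> h + cb b c \<star> Xf b f h"
  using assms(4,1) by (rule parity_cases)
    (use assms(2,3) in \<open>simp_all add: cb_def Lw_def Xf_def psign_def sdefs algebra_simps fun_eq_iff add_divide_distrib diff_divide_distrib\<close>)

lemma gcomm: "has_parity b p \<Longrightarrow> cb b c \<star> p = p \<star> c"
  unfolding has_parity_def cb_def by (cases b) (simp_all add: sdefs algebra_simps fun_eq_iff)

lemma sinv_par: "has_parity b p \<Longrightarrow> sinv p = scal (psign b) p"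
  unfolding has_parity_def by (cases b) (simp_all add: sdefs psign_def fun_eq_iff)

lemma par_dx: "has_parity b f \<Longrightarrow> has_parity b (dx f)"
  unfolding has_parity_def by (cases b) (simp_all add: sdefs)
lemma par_D12: "has_parity b f \<Longrightarrow> has_parity b (Db1 (Db2 f))"
  unfolding has_parity_def by (cases b) (simp_all add: sdefs)

lemma sms_Xf[simp]: "smooth_sf f \<Longrightarrow> smooth_sf h \<Longrightarrow> smooth_sf (Xf b f h)"
  by (simp add: Xf_def)
lemma sms_Lw[simp]: "smooth_sf f \<Longrightarrow> smooth_sf h \<Longrightarrow> smooth_sf (Lw mu b f h)"
  by (simp add: Lw_def)
lemma sms_cb[simp]: "smooth_sf c \<Longrightarrow> smooth_sf (cb b c)"
  by (simp add: cb_def)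

lemma Xf_lin:
  "smooth_sf f \<Longrightarrow> smooth_sf x \<Longrightarrow> smooth_sf y \<Longrightarrow> Xf b f (x + y) = Xf b f x + Xf b f y"
  "smooth_sf f \<Longrightarrow> smooth_sf x \<Longrightarrow> smooth_sf y \<Longrightarrow> Xf b f (x - y) = Xf b f x - Xf b f y"
  "smooth_sf f \<Longrightarrow> smooth_sf x \<Longrightarrow> Xf b f (- x) = - Xf b f x"
  "smooth_sf f \<Longrightarrow> smooth_sf x \<Longrightarrow> Xf b f (scal c x) = scal c (Xf b f x)"
  "Xf b f 0 = 0"
  by (simp_all add: Xf_def sdefs algebra_simps fun_eq_iff)

lemma Lw_lin:
  "smooth_sf f \<Longrightarrow> smooth_sf x \<Longrightarrow> smooth_sf y \<Longrightarrow> Lw mu b f (x + y) = Lw mu b f x + Lw mu b f y"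
  "smooth_sf f \<Longrightarrow> smooth_sf x \<Longrightarrow> smooth_sf y \<Longrightarrow> Lw mu b f (x - y) = Lw mu b f x - Lw mu b f y"
  "smooth_sf f \<Longrightarrow> smooth_sf x \<Longrightarrow> Lw mu b f (- x) = - Lw mu b f x"
  "smooth_sf f \<Longrightarrow> smooth_sf x \<Longrightarrow> Lw mu b f (scal c x) = scal c (Lw mu b f x)"
  "Lw mu b f 0 = 0"
  by (simp_all add: Lw_def Xf_def sdefs algebra_simps fun_eq_iff)

lemma Lw_Xf: "Lw mu b f h = Xf b f h + scal mu (dx f \<star> h)"
  by (simp add: Lw_def)

lemma in_D_Xf: "smooth_sf f \<Longrightarrow> in_D 2 (Xf b f)"
proof -
  assume f: "smooth_sf f"
  have "in_D 2 (\<lambda>g. f \<star> dx g - scal (psign b / 2) (Db1 f \<star> Db1 g + Db2 f \<star> Db2 g))"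
    using f by (intro in_D_diff in_D_scal in_D_add in_D_lmul in_D_dx in_D_Db1 in_D_Db2) auto
  then show ?thesis by (rule in_D_cong) (simp add: Xf_def)
qed

lemma in_D_Xf_dx: "smooth_sf f \<Longrightarrow> in_D 1 (\<lambda>h. Xf b (dx f) h - dx f \<star> dx h)"
proof -
  assume f: "smooth_sf f"
  have "in_D 1 (\<lambda>g. - scal (psign b / 2) (Db1 (dx f) \<star> Db1 g + Db2 (dx f) \<star> Db2 g))"
    using f by (intro in_D_uminus in_D_scal in_D_add in_D_lmul in_D_Db1 in_D_Db2) auto
  then show ?thesis by (rule in_D_cong) (simp add: Xf_def)
qed



lemma scal_two: "scal 2 x = x + x"
  by (simp add: sdefs algebra_simps fun_eq_iff)

lemma dxpow_lin:
  "smooth_sf x \<Longrightarrow> smooth_sf y \<Longrightarrow> (dx ^^ n) (x + y) = (dx ^^ n) x + (dx ^^ n) y"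
  "smooth_sf x \<Longrightarrow> smooth_sf y \<Longrightarrow> (dx ^^ n) (x - y) = (dx ^^ n) x - (dx ^^ n) y"
  "smooth_sf x \<Longrightarrow> (dx ^^ n) (scal c x) = scal c ((dx ^^ n) x)"
  "(dx ^^ n) 0 = 0"
  by (induction n) (auto simp: dx_rules)

definition Erem :: "bool \<Rightarrow> sfun \<Rightarrow> nat \<Rightarrow> sfun \<Rightarrow> sfun" where
  "Erem b f n h = (dx ^^ n) (Xf b f h) - Xf b f ((dx ^^ n) h) - scal (of_nat n) (dx f \<star> (dx ^^ n) h)"

lemma Erem_step:
  assumes f: "smooth_sf f" and h: "smooth_sf h"
  shows "Erem b f (Suc (Suc l)) h = dx (Erem b f (Suc l) h)
     + (Xf b (dx f) ((dx ^^ Suc l) h) - dx f \<star> dx ((dx ^^ Suc l) h))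
     + scal (of_nat (Suc l)) (dx (dx f) \<star> (dx ^^ Suc l) h)"
proof -
  define y where "y = (dx ^^ Suc l) h"
  have y: "smooth_sf y" using h by (simp add: y_def)
  have e1: "(dx ^^ Suc (Suc l)) h = dx y" by (simp add: y_def)
  have e2: "(dx ^^ Suc (Suc l)) (Xf b f h) = dx ((dx ^^ Suc l) (Xf b f h))" by simp
  have dxE: "dx (Erem b f (Suc l) h) = (dx ^^ Suc (Suc l)) (Xf b f h) - Xf b f (dx y) - Xf b (dx f) y
      - scal (of_nat (Suc l)) (dx (dx f) \<star> y + dx f \<star> dx y)"
    using f h y by (simp add: Erem_def e2 y_def[symmetric] dx_rules Xf_dx del: funpow.simps)
  have E2: "Erem b f (Suc (Suc l)) h = (dx ^^ Suc (Suc l)) (Xf b f h) - Xf b f (dx y)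
      - scal (of_nat (Suc (Suc l))) (dx f \<star> dx y)"
    by (simp only: Erem_def e1)
  show ?thesis
    unfolding dxE E2 y_def[symmetric]
    by (simp add: scal_distrib scal_two algebra_simps del: funpow.simps)
qed

lemma in_D_Erem: "smooth_sf f \<Longrightarrow> in_D (2 * l + 1) (Erem b f (Suc l))"
proof (induction l)
  case 0
  have "in_D 1 (\<lambda>h. Xf b (dx f) h - dx f \<star> dx h)" using in_D_Xf_dx[OF 0] .
  then have "in_D 1 (Erem b f (Suc 0))" by (rule in_D_cong) (use 0 in \<open>simp add: Erem_def Xf_dx\<close>)
  then show ?case by simp
next
  case (Suc l)
  have a: "in_D (2 * l + 1 + 2) (\<lambda>h. dx (Erem b f (Suc l) h))"
    by (rule lcomp_dx[OF Suc.IH[OF Suc.prems]])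
  have b: "in_D (1 + 2 * (Suc l)) (\<lambda>h. Xf b (dx f) ((dx ^^ Suc l) h) - dx f \<star> dx ((dx ^^ Suc l) h))"
    using in_D_comp[OF in_D_Xf_dx[OF Suc.prems, of b] in_D_mon1[of 0 0 "Suc l" "2 * Suc l"]]
    by (simp add: mono_op_def)
  have c: "in_D (2 * Suc l) (\<lambda>h. scal (of_nat (Suc l)) (dx (dx f) \<star> (dx ^^ Suc l) h))"
    using in_D_scal[OF in_D_monomial[of 0 0 "Suc l" "2 * Suc l" "dx (dx f)"]] Suc.prems
    by (simp add: mono_op_def)
  have "in_D (2 * Suc l + 1) (\<lambda>h. dx (Erem b f (Suc l) h)
     + (Xf b (dx f) ((dx ^^ Suc l) h) - dx f \<star> dx ((dx ^^ Suc l) h))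
     + scal (of_nat (Suc l)) (dx (dx f) \<star> (dx ^^ Suc l) h))"
    by (intro in_D_add in_D_mono[OF a] in_D_mono[OF b] in_D_mono[OF c]) auto
  then show ?case by (rule in_D_cong) (use Suc.prems in \<open>simp add: Erem_step del: funpow.simps\<close>)
qed

lemma in_D_CX: "smooth_sf f \<Longrightarrow> in_D (2 * l) (\<lambda>y. Xf b f ((dx ^^ l) y) - (dx ^^ l) (Xf b f y))"
proof (cases l)
  case 0 then show ?thesis by (simp add: in_D_zero)
next
  case (Suc l')
  assume f: "smooth_sf f"
  have "in_D (2 * l) (\<lambda>y. - Erem b f (Suc l') y - scal (of_nat (Suc l')) (dx f \<star> (dx ^^ Suc l') y))"
    using Suc f by (intro in_D_diff in_D_uminus in_D_mono[OF in_D_Erem] in_D_scal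
         in_D_cong[OF in_D_monomial[of 0 0 "Suc l'" "2 * l" "dx f"]]) (auto simp: mono_op_def)
  then show ?thesis by (rule in_D_cong) (use Suc in \<open>simp add: Erem_def del: funpow.simps\<close>)
qed



lemma scal_scal[simp]: "scal c (scal d f) = scal (c * d) f"
  by (simp add: scal_distrib)

definition Q1 :: "sfun \<Rightarrow> sfun \<Rightarrow> sfun" where
  "Q1 f h = scal (1/2) (dx f \<star> Db1 h) - scal (1/2) (Db1 (Db2 f) \<star> Db2 h)"
definition Q2 :: "sfun \<Rightarrow> sfun \<Rightarrow> sfun" where
  "Q2 f h = scal (1/2) (dx f \<star> Db2 h) + scal (1/2) (Db1 (Db2 f) \<star> Db1 h)"

lemma sms_Q[simp]: "smooth_sf f \<Longrightarrow> smooth_sf h \<Longrightarrow> smooth_sf (Q1 f h)"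
  "smooth_sf f \<Longrightarrow> smooth_sf h \<Longrightarrow> smooth_sf (Q2 f h)"
  by (simp_all add: Q1_def Q2_def)

lemma in_D_Q: "smooth_sf f \<Longrightarrow> in_D 1 (Q1 f)" "smooth_sf f \<Longrightarrow> in_D 1 (Q2 f)"
proof -
  assume f: "smooth_sf f"
  have "in_D 1 (\<lambda>h. scal (1/2) (dx f \<star> Db1 h) - scal (1/2) (Db1 (Db2 f) \<star> Db2 h))"
    using f by (intro in_D_diff in_D_scal in_D_lmul in_D_Db1 in_D_Db2) auto
  then show "in_D 1 (Q1 f)" by (rule in_D_cong) (simp add: Q1_def)
  have "in_D 1 (\<lambda>h. scal (1/2) (dx f \<star> Db2 h) + scal (1/2) (Db1 (Db2 f) \<star> Db1 h))"
    using f by (intro in_D_add in_D_scal in_D_lmul in_D_Db1 in_D_Db2) auto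
  then show "in_D 1 (Q2 f)" by (rule in_D_cong) (simp add: Q2_def)
qed

lemma XD1: "smooth_sf f \<Longrightarrow> smooth_sf h \<Longrightarrow> has_parity b f \<Longrightarrow>
   scal (psign b) (Db1 (Xf b f h)) = Xf b f (Db1 h) + Q1 f h"
  by (simp add: Xf_Db1 Q1_def scal_distrib)
lemma XD2: "smooth_sf f \<Longrightarrow> smooth_sf h \<Longrightarrow> has_parity b f \<Longrightarrow>
   scal (psign b) (Db2 (Xf b f h)) = Xf b f (Db2 h) + Q2 f h"
  by (simp add: Xf_Db2 Q2_def scal_distrib)

lemma in_D_CN:
  assumes f: "smooth_sf f" "has_parity b f" and mn: "m < 2" "n < 2"
  shows "in_D (m + n) (\<lambda>h. Xf b f (mono_op 0 m n h) - scal (psign (b \<and> odd (m + n))) (mono_op 0 m n (Xf b f h)))"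
proof -
  consider "m = 0" "n = 0" | "m = 1" "n = 0" | "m = 0" "n = 1" | "m = 1" "n = 1"
    using less2[OF mn(1)] less2[OF mn(2)] by blast
  then show ?thesis
  proof cases
    case 1 then show ?thesis by (simp add: mono_op_def psign_def in_D_zero)
  next
    case 2
    have "in_D 1 (\<lambda>h. - Q1 f h)" by (rule in_D_uminus[OF in_D_Q(1)[OF f(1)]])
    then have "in_D 1 (\<lambda>h. Xf b f (Db1 h) - scal (psign b) (Db1 (Xf b f h)))"
      by (rule in_D_cong) (use f in \<open>simp add: XD1\<close>)
    then show ?thesis using 2 by (simp add: mono_op_def)
  next
    case 3
    have "in_D 1 (\<lambda>h. - Q2 f h)" by (rule in_D_uminus[OF in_D_Q(2)[OF f(1)]])
    then have "in_D 1 (\<lambda>h. Xf b f (Db2 h) - scal (psign b) (Db2 (Xf b f h)))"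
      by (rule in_D_cong) (use f in \<open>simp add: XD2\<close>)
    then show ?thesis using 3 by (simp add: mono_op_def)
  next
    case 4
    have a: "in_D 2 (\<lambda>h. Q1 f (Db2 h))" by (rule in_D_mono[OF in_D_comp[OF in_D_Q(1)[OF f(1)] in_D_Db2[of 1]]]) simp_all
    have b: "in_D 2 (\<lambda>h. Db1 (Q2 f h))" by (rule in_D_mono[OF lcomp_Db1[OF in_D_Q(2)[OF f(1)]]]) simp
    have "in_D 2 (\<lambda>h. - Q1 f (Db2 h) - scal (psign b) (Db1 (Q2 f h)))"
      using a b by (intro in_D_diff in_D_uminus in_D_scal) auto
    then have "in_D 2 (\<lambda>h. Xf b f (Db1 (Db2 h)) - Db1 (Db2 (Xf b f h)))"
    proof (rule in_D_cong)
      fix h assume h: "smooth_sf h"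
      have "Db2 (Xf b f h) = scal (psign b) (Xf b f (Db2 h) + Q2 f h)"
        using XD2[OF f(1) h f(2)] by (metis scal_scal psign_sq scal_simps(1))
      then have "Db1 (Db2 (Xf b f h)) = scal (psign b) (Db1 (Xf b f (Db2 h))) + scal (psign b) (Db1 (Q2 f h))"
        using f h by (simp add: Db_rules scal_distrib)
      also have "scal (psign b) (Db1 (Xf b f (Db2 h))) = Xf b f (Db1 (Db2 h)) + Q1 f (Db2 h)"
        using XD1[OF f(1) _ f(2), of "Db2 h"] h by simp
      finally show "- Q1 f (Db2 h) - scal (psign b) (Db1 (Q2 f h)) = Xf b f (Db1 (Db2 h)) - Db1 (Db2 (Xf b f h))"
        by (simp add: algebra_simps)
    qed
    then show ?thesis using 4 by (simp add: mono_op_def psign_def numeral_2_eq_2)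
  qed
qed

lemma mono_split: "mono_op l m n h = (dx ^^ l) (mono_op 0 m n h)"
  by (simp add: mono_op_def)

lemma in_D_CM:
  assumes f: "smooth_sf f" "has_parity b f" and mn: "m < 2" "n < 2"
  shows "in_D (2 * l + m + n) (\<lambda>h. Xf b f (mono_op l m n h) - scal (psign (b \<and> odd (m + n))) (mono_op l m n (Xf b f h)))"
proof -
  let ?s = "psign (b \<and> odd (m + n))"
  have a: "in_D (2 * l + (m + n)) (\<lambda>h. Xf b f ((dx ^^ l) (mono_op 0 m n h)) - (dx ^^ l) (Xf b f (mono_op 0 m n h)))"
    by (rule in_D_comp[OF in_D_CX[OF f(1)] in_D_mon1]) (use mn in auto)
  have b: "in_D (m + n + 2 * l) (\<lambda>h. (dx ^^ l) (Xf b f (mono_op 0 m n h) - scal ?s (mono_op 0 m n (Xf b f h))))"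
    by (rule lcomp_dxpow[OF in_D_CN[OF f mn]])
  have "in_D (2 * l + m + n) (\<lambda>h. (Xf b f ((dx ^^ l) (mono_op 0 m n h)) - (dx ^^ l) (Xf b f (mono_op 0 m n h)))
       + (dx ^^ l) (Xf b f (mono_op 0 m n h) - scal ?s (mono_op 0 m n (Xf b f h))))"
    using a b by (intro in_D_add) (auto simp: algebra_simps)
  then show ?thesis
    by (rule in_D_cong) (use f in \<open>simp add: mono_split[of l] dxpow_lin del: funpow.simps\<close>)
qed



lemma Db1pow_lin:
  "smooth_sf x \<Longrightarrow> smooth_sf y \<Longrightarrow> (Db1 ^^ n) (x + y) = (Db1 ^^ n) x + (Db1 ^^ n) y"
  "smooth_sf x \<Longrightarrow> smooth_sf y \<Longrightarrow> (Db1 ^^ n) (x - y) = (Db1 ^^ n) x - (Db1 ^^ n) y"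
  "smooth_sf x \<Longrightarrow> (Db1 ^^ n) (scal c x) = scal c ((Db1 ^^ n) x)"
  by (induction n) (auto simp: Db_rules)
lemma Db2pow_lin:
  "smooth_sf x \<Longrightarrow> smooth_sf y \<Longrightarrow> (Db2 ^^ n) (x + y) = (Db2 ^^ n) x + (Db2 ^^ n) y"
  "smooth_sf x \<Longrightarrow> smooth_sf y \<Longrightarrow> (Db2 ^^ n) (x - y) = (Db2 ^^ n) x - (Db2 ^^ n) y"
  "smooth_sf x \<Longrightarrow> (Db2 ^^ n) (scal c x) = scal c ((Db2 ^^ n) x)"
  by (induction n) (auto simp: Db_rules)

lemma mono_lin:
  "smooth_sf x \<Longrightarrow> smooth_sf y \<Longrightarrow> mono_op l m n (x + y) = mono_op l m n x + mono_op l m n y"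
  "smooth_sf x \<Longrightarrow> smooth_sf y \<Longrightarrow> mono_op l m n (x - y) = mono_op l m n x - mono_op l m n y"
  "smooth_sf x \<Longrightarrow> mono_op l m n (scal c x) = scal c (mono_op l m n x)"
  by (simp_all add: mono_op_def Db1pow_lin Db2pow_lin dxpow_lin del: funpow.simps)

lemma if_add0: "(if P then u + v else (0::sfun)) = (if P then u else 0) + (if P then v else 0)"
  by simp
lemma if_sub0: "(if P then u - v else (0::sfun)) = (if P then u else 0) - (if P then v else 0)"
  by simp

lemma DS_lin:
  assumes "\<And>l m n. smooth_sf (a l m n)" "smooth_sf x" "smooth_sf y"
  shows "DS K a (x + y) = DS K a x + DS K a y" "DS K a (x - y) = DS K a x - DS K a y"
  using assms by (simp_all add: DS_def mono_lin gm_distrib if_add0 if_sub0 sum.distrib sum_subtractf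
     cong: if_cong)

lemma in_D_lin:
  assumes "in_D K A" "smooth_sf x" "smooth_sf y"
  shows "A (x + y) = A x + A y" "A (x - y) = A x - A y"
proof -
  obtain a where a: "\<forall>l m n. smooth_sf (a l m n)" "\<forall>g. smooth_sf g \<longrightarrow> A g = DS K a g"
    using assms(1) unfolding in_D_alt by blast
  show "A (x + y) = A x + A y" "A (x - y) = A x - A y"
    using a assms DS_lin[of a x y K] by simp_all
qed

lemma ev_od: "ev_part x + od_part x = x" "ev_part x - od_part x = sinv x"
  "ev_part (x + y) = ev_part x + ev_part y" "od_part (x + y) = od_part x + od_part y"
  by (simp_all add: sdefs fun_eq_iff)

definition tw :: "bool \<Rightarrow> (sfun \<Rightarrow> sfun) \<Rightarrow> sfun \<Rightarrow> sfun" where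
  "tw b A k = (if b then sinv (A (sinv k)) else A k)"

definition Lp :: "complex \<Rightarrow> complex \<Rightarrow> bool \<Rightarrow> sfun \<Rightarrow> (sfun \<Rightarrow> sfun) \<Rightarrow> sfun \<Rightarrow> sfun" where
  "Lp lam mu b f A g = Lw mu b f (A g) - tw b A (Lw lam b f g)"

lemma Lop_Lp:
  assumes A: "in_D K A" and f: "smooth_sf f" and g: "smooth_sf g"
  shows "Lop lam mu b f A g = Lp lam mu b f A g"
proof -
  define k where "k = Lw lam b f g"
  have k: "smooth_sf k" using f g by (simp add: k_def)
  have split: "A k = A (ev_part k) + A (od_part k)"
    using in_D_lin(1)[OF A, of "ev_part k" "od_part k"] k by (simp add: ev_od)
  have split2: "A (sinv k) = A (ev_part k) - A (od_part k)"
    using in_D_lin(2)[OF A, of "ev_part k" "od_part k"] k by (simp add: ev_od)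
  show ?thesis
  proof (cases b)
    case False
    have "op_even A k + op_odd A k = A k"
      unfolding op_even_def op_odd_def split
      by (metis (no_types, lifting) ev_od(1) add.assoc add.commute)
    then show ?thesis unfolding Lop_def Lp_def tw_def k_def[symmetric] using False
      by (simp add: psign_def algebra_simps)
  next
    case True
    have "op_even A k - op_odd A k = sinv (A (ev_part k)) - sinv (A (od_part k))"
      unfolding op_even_def op_odd_def by (simp add: ev_od(2)[symmetric] algebra_simps)
    also have "\<dots> = sinv (A (sinv k))" unfolding split2 inv_rules(4) ..
    finally have "op_even A k - op_odd A k = sinv (A (sinv k))" .
    then show ?thesis unfolding Lop_def Lp_def tw_def k_def[symmetric] using True
      by (simp add: psign_def algebra_simps)
  qed
qed

lemma Lp_add:
  assumes "in_D K A" "in_D K' B" "smooth_sf f" "smooth_sf g"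
  shows "Lp lam mu b f (\<lambda>g. A g + B g) g = Lp lam mu b f A g + Lp lam mu b f B g"
  using assms in_D_smooth[OF assms(1)] in_D_smooth[OF assms(2)]
  by (simp add: Lp_def tw_def Lw_lin inv_rules algebra_simps)

lemma Lp_zero: "Lp lam mu b f (\<lambda>g. 0) g = 0"
  by (simp add: Lp_def tw_def Lw_lin inv_rules)

lemma Lp_sum:
  assumes "finite I" "\<And>i. i \<in> I \<Longrightarrow> in_D K (T i)" "smooth_sf f" "smooth_sf g"
  shows "Lp lam mu b f (\<lambda>g. \<Sum>i\<in>I. T i g) g = (\<Sum>i\<in>I. Lp lam mu b f (T i) g)"
  using assms(1,2)
proof (induction I rule: finite_induct)
  case empty then show ?case by (simp add: Lp_zero)
next
  case (insert i I)
  have "Lp lam mu b f (\<lambda>g. \<Sum>i\<in>insert i I. T i g) g = Lp lam mu b f (\<lambda>g. T i g + (\<Sum>i\<in>I. T i g)) g"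
    using insert by simp
  also have "\<dots> = Lp lam mu b f (T i) g + Lp lam mu b f (\<lambda>g. \<Sum>i\<in>I. T i g) g"
    using insert assms by (intro Lp_add[of K _ K]) (auto intro: in_D_sum)
  finally show ?case using insert by simp
qed

lemma Lp_if: "Lp lam mu b f (\<lambda>g. if P then A g else 0) g = (if P then Lp lam mu b f A g else 0)"
  by (cases P) (simp_all add: Lp_zero)

lemma Lp_cong: "(\<And>x. smooth_sf x \<Longrightarrow> A x = B x) \<Longrightarrow> smooth_sf f \<Longrightarrow> smooth_sf g \<Longrightarrow>
   Lp lam mu b f A g = Lp lam mu b f B g"
  by (simp add: Lp_def tw_def)

lemma sinv_dxpow: "smooth_sf x \<Longrightarrow> sinv ((dx ^^ l) x) = (dx ^^ l) (sinv x)"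
  by (induction l) (auto simp: inv_rules)

lemma sinv_mono:
  assumes "smooth_sf k" "m < 2" "n < 2"
  shows "sinv (mono_op l m n (sinv k)) = scal (psign (odd (m + n))) (mono_op l m n k)"
proof -
  consider "m = 0" "n = 0" | "m = 1" "n = 0" | "m = 0" "n = 1" | "m = 1" "n = 1"
    using less2[OF assms(2)] less2[OF assms(3)] by blast
  then show ?thesis using assms(1)
    by cases (simp_all add: mono_op_def sinv_dxpow inv_rules psign_def dxpow_lin dxpow_minus Db_rules)
qed

lemma in_D_KM:
  assumes f: "smooth_sf f" "has_parity b f" and mn: "m < 2" "n < 2" and c: "smooth_sf c"
  shows "in_D (2 * l + m + n) (Lp lam mu b f (\<lambda>g. c \<star> mono_op l m n g))"
proof -
  let ?s = "psign (b \<and> odd (m + n))"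
  let ?M = "mono_op l m n"
  have e: "Lp lam mu b f (\<lambda>g. c \<star> ?M g) g = Lw mu b f c \<star> ?M g
     + cb b c \<star> (Xf b f (?M g) - scal ?s (?M (Xf b f g)))
     - cb b c \<star> scal (?s * lam) (?M (dx f \<star> g))" if g: "smooth_sf g" for g
  proof -
    have tw: "tw b (\<lambda>g. c \<star> ?M g) k = cb b c \<star> scal ?s (?M k)" if k: "smooth_sf k" for k
      using sinv_mono[OF k mn, of l] by (cases b) (simp_all add: tw_def cb_def inv_rules psign_def)
    have g2: "smooth_sf (dx f \<star> g)" "smooth_sf (Xf b f g)" using f g by auto
    have "Lp lam mu b f (\<lambda>g. c \<star> ?M g) g = (Lw mu b f c \<star> ?M g + cb b c \<star> Xf b f (?M g))
        - cb b c \<star> scal ?s (?M (Xf b f g) + scal lam (?M (dx f \<star> g)))"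
      unfolding Lp_def using f g c g2
      by (simp add: tw Lw_gmul mono_lin Lw_Xf[of lam b f g])
    also have "\<dots> = (Lw mu b f c \<star> ?M g + cb b c \<star> Xf b f (?M g))
        - (cb b c \<star> scal ?s (?M (Xf b f g)) + cb b c \<star> scal (?s * lam) (?M (dx f \<star> g)))"
      by (simp add: scal_distrib(1) gm_distrib)
    finally show ?thesis by (simp add: gm_distrib algebra_simps)
  qed
  have "in_D (2 * l + m + n) (\<lambda>g. Lw mu b f c \<star> ?M g
     + cb b c \<star> (Xf b f (?M g) - scal ?s (?M (Xf b f g)))
     - cb b c \<star> scal (?s * lam) (?M (dx f \<star> g)))"
  proof -
    have 1: "in_D (2 * l + m + n) (\<lambda>g. Lw mu b f c \<star> ?M g)" using f c mn by (intro in_D_monomial) auto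
    have 2: "in_D (2 * l + m + n) (\<lambda>g. Xf b f (?M g) - scal ?s (?M (Xf b f g)))" by (rule in_D_CM[OF f mn])
    have 3: "in_D (2 * l + m + n) (\<lambda>g. ?M (dx f \<star> g))"
      using in_D_comp[OF in_D_mon1[of m n l "2 * l + m + n"] in_D_mul[of "dx f" 0]] f mn by simp
    show ?thesis
      by (rule in_D_diff[OF in_D_add[OF 1 in_D_lmul[OF 2]] in_D_lmul[OF in_D_scal[OF 3]]]) (use c in auto)
  qed
  then show ?thesis by (rule in_D_cong) (simp add: e)
qed

lemma in_D_Lop:
  assumes B: "in_D K B" and f: "smooth_sf f" "has_parity b f"
  shows "in_D K (Lop lam mu b f B)"
proof -
  obtain a where a: "\<forall>l m n. smooth_sf (a l m n)" "\<forall>g. smooth_sf g \<longrightarrow> B g = DS K a g"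
    using B unfolding in_D_alt by blast
  define T where "T l m n g = (if 2 * l + m + n \<le> K then a l m n \<star> mono_op l m n g else 0)" for l m n g
  have inT: "in_D K (T l m n)" if "m < 2" "n < 2" for l m n
    unfolding T_def using a that by (intro in_D_if in_D_monomial) auto
  have inT2: "in_D K (\<lambda>g. \<Sum>n<2. T l m n g)" if "m < 2" for l m
    using that by (rule_tac in_D_sum) (auto intro: inT)
  have inT3: "in_D K (\<lambda>g. \<Sum>m<2. \<Sum>n<2. T l m n g)" for l
    by (rule in_D_sum) (auto intro: inT2)
  have eq: "Lop lam mu b f B g = (\<Sum>l\<le>K. \<Sum>m<2. \<Sum>n<2. Lp lam mu b f (T l m n) g)"
    if g: "smooth_sf g" for g
  proof -
    have "Lop lam mu b f B g = Lp lam mu b f B g" by (rule Lop_Lp[OF B f(1) g])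
    also have "\<dots> = Lp lam mu b f (\<lambda>g. \<Sum>l\<le>K. \<Sum>m<2. \<Sum>n<2. T l m n g) g"
      using a f g by (intro Lp_cong) (auto simp: DS_def T_def)
    also have "\<dots> = (\<Sum>l\<le>K. Lp lam mu b f (\<lambda>g. \<Sum>m<2. \<Sum>n<2. T l m n g) g)"
      by (rule Lp_sum[OF _ inT3 f(1) g]) auto
    also have "\<dots> = (\<Sum>l\<le>K. \<Sum>m<2. Lp lam mu b f (\<lambda>g. \<Sum>n<2. T l m n g) g)"
      by (intro sum.cong refl Lp_sum[OF _ inT2 f(1) g]) auto
    also have "\<dots> = (\<Sum>l\<le>K. \<Sum>m<2. \<Sum>n<2. Lp lam mu b f (T l m n) g)"
      by (intro sum.cong refl Lp_sum[OF _ inT f(1) g]) auto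
    finally show ?thesis .
  qed
  have "in_D K (\<lambda>g. \<Sum>l\<le>K. \<Sum>m<2. \<Sum>n<2. Lp lam mu b f (T l m n) g)"
  proof (intro in_D_sum, simp_all)
    fix l m n :: nat assume "m < 2" "n < 2"
    show "in_D K (Lp lam mu b f (T l m n))"
    proof (cases "2 * l + m + n \<le> K")
      case True
      have "in_D K (Lp lam mu b f (\<lambda>g. a l m n \<star> mono_op l m n g))"
        using in_D_KM[OF f \<open>m < 2\<close> \<open>n < 2\<close>, of "a l m n" l lam mu] a True by (auto intro: in_D_mono)
      moreover have "T l m n = (\<lambda>g. a l m n \<star> mono_op l m n g)" using True by (auto simp: T_def)
      ultimately show ?thesis by simp
    next
      case False
      then have "T l m n = (\<lambda>g. 0)" by (auto simp: T_def)
      moreover have "Lp lam mu b f (\<lambda>g. 0) = (\<lambda>g. 0)" by (rule ext) (simp add: Lp_zero)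
      ultimately show ?thesis by (simp add: in_D_zero)
    qed
  qed
  then show ?thesis by (rule in_D_cong) (simp add: eq)
qed



lemma scal_diff: "scal (c - d) x = scal c x - scal d x"
  by (simp add: sdefs algebra_simps fun_eq_iff)

lemma in_D_Erem_comp: "smooth_sf f \<Longrightarrow> in_D 1 M \<Longrightarrow> in_D (2 * n) (\<lambda>g. Erem b f n (M g))"
proof (cases n)
  case 0 then show ?thesis by (simp add: Erem_def in_D_zero)
next
  case (Suc l)
  assume "smooth_sf f" "in_D 1 M"
  then show ?thesis using in_D_comp[OF in_D_Erem[of f l b] \<open>in_D 1 M\<close>] Suc by simp
qed

lemma in_D_LB: assumes c: "smooth_sf c" and M: "in_D K M"
  shows "in_D (2 * l + K) (\<lambda>g. (dx ^^ Suc l) (c \<star> M g) - c \<star> (dx ^^ Suc l) (M g))"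
proof (induction l)
  case 0
  have "in_D K (\<lambda>g. dx c \<star> M g)" using in_D_lmul[OF M] c by simp
  then have "in_D K (\<lambda>g. (dx ^^ Suc 0) (c \<star> M g) - c \<star> (dx ^^ Suc 0) (M g))"
    by (rule in_D_cong) (use c in_D_smooth[OF M] in \<open>simp add: dx_rules\<close>)
  then show ?case by simp
next
  case (Suc l)
  have a: "in_D (2 * l + K + 2) (\<lambda>g. dx ((dx ^^ Suc l) (c \<star> M g) - c \<star> (dx ^^ Suc l) (M g)))"
    by (rule lcomp_dx[OF Suc.IH])
  have b: "in_D (K + 2 * Suc l) (\<lambda>g. dx c \<star> (dx ^^ Suc l) (M g))"
    using in_D_lmul[OF lcomp_dxpow[OF M, of "Suc l"], of "dx c"] c by simp
  have "in_D (2 * Suc l + K) (\<lambda>g. dx ((dx ^^ Suc l) (c \<star> M g) - c \<star> (dx ^^ Suc l) (M g)) + dx c \<star> (dx ^^ Suc l) (M g))"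
    by (rule in_D_add[OF in_D_mono[OF a] in_D_mono[OF b]]) auto
  then show ?case
  proof (rule in_D_cong)
    fix g assume g: "smooth_sf g"
    have Mg: "smooth_sf (M g)" using in_D_smooth[OF M g] .
    show "dx ((dx ^^ Suc l) (c \<star> M g) - c \<star> (dx ^^ Suc l) (M g)) + dx c \<star> (dx ^^ Suc l) (M g)
        = (dx ^^ Suc (Suc l)) (c \<star> M g) - c \<star> (dx ^^ Suc (Suc l)) (M g)"
      using c Mg by (simp add: dx_rules del: funpow.simps) (simp add: algebra_simps)
  qed
qed

lemma in_D_LBn: assumes c: "smooth_sf c" and M: "in_D 1 M"
  shows "in_D (2 * n) (\<lambda>g. (dx ^^ n) (c \<star> M g) - c \<star> (dx ^^ n) (M g))"
proof (cases n)
  case 0 then show ?thesis by (simp add: in_D_zero)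
next
  case (Suc l)
  then show ?thesis using in_D_mono[OF in_D_LB[OF c M, of l]] by simp
qed

lemma dxpow_scal_rev: "smooth_sf y \<Longrightarrow> scal c ((dx ^^ n) y) = (dx ^^ n) (scal c y)"
  by (simp add: dxpow_lin)

lemma in_D_R1:
  assumes f: "smooth_sf f" "has_parity b f"
  shows "in_D (2 * n) (\<lambda>g. Xf b f ((dx ^^ n) (Db1 g)) - scal (psign b) ((dx ^^ n) (Db1 (Xf b f g)))
            + scal (of_nat n + 1/2) (dx f \<star> (dx ^^ n) (Db1 g)) - scal (1/2) (Db1 (Db2 f) \<star> (dx ^^ n) (Db2 g)))"
proof -
  have E: "in_D (2 * n) (\<lambda>g. Erem b f n (Db1 g))" by (rule in_D_Erem_comp[OF f(1) in_D_Db1]) simp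
  have L1: "in_D (2 * n) (\<lambda>g. (dx ^^ n) (dx f \<star> Db1 g) - dx f \<star> (dx ^^ n) (Db1 g))"
    by (rule in_D_LBn) (use f in \<open>auto intro: in_D_Db1\<close>)
  have L2: "in_D (2 * n) (\<lambda>g. (dx ^^ n) (Db1 (Db2 f) \<star> Db2 g) - Db1 (Db2 f) \<star> (dx ^^ n) (Db2 g))"
    by (rule in_D_LBn) (use f in \<open>auto intro: in_D_Db2\<close>)
  have "in_D (2 * n) (\<lambda>g. - Erem b f n (Db1 g)
      - scal (1/2) ((dx ^^ n) (dx f \<star> Db1 g) - dx f \<star> (dx ^^ n) (Db1 g))
      + scal (1/2) ((dx ^^ n) (Db1 (Db2 f) \<star> Db2 g) - Db1 (Db2 f) \<star> (dx ^^ n) (Db2 g)))"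
    by (rule in_D_add[OF in_D_diff[OF in_D_uminus[OF E] in_D_scal[OF L1]] in_D_scal[OF L2]])
  then show ?thesis
  proof (rule in_D_cong)
    fix g assume g: "smooth_sf g"
    have k1: "scal (psign b) ((dx ^^ n) (Db1 (Xf b f g))) = (dx ^^ n) (Xf b f (Db1 g))
        + (scal (1/2) ((dx ^^ n) (dx f \<star> Db1 g)) - scal (1/2) ((dx ^^ n) (Db1 (Db2 f) \<star> Db2 g)))"
    proof -
      have "scal (psign b) ((dx ^^ n) (Db1 (Xf b f g))) = (dx ^^ n) (scal (psign b) (Db1 (Xf b f g)))"
        using f g by (simp add: dxpow_scal_rev)
      also have "\<dots> = (dx ^^ n) (Xf b f (Db1 g) + Q1 f g)" using f g by (simp add: XD1)
      also have "\<dots> = (dx ^^ n) (Xf b f (Db1 g)) + (scal (1/2) ((dx ^^ n) (dx f \<star> Db1 g)) - scal (1/2) ((dx ^^ n) (Db1 (Db2 f) \<star> Db2 g)))"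
        using f g by (simp add: Q1_def dxpow_lin)
      finally show ?thesis .
    qed
    show "- Erem b f n (Db1 g)
      - scal (1/2) ((dx ^^ n) (dx f \<star> Db1 g) - dx f \<star> (dx ^^ n) (Db1 g))
      + scal (1/2) ((dx ^^ n) (Db1 (Db2 f) \<star> Db2 g) - Db1 (Db2 f) \<star> (dx ^^ n) (Db2 g))
      = Xf b f ((dx ^^ n) (Db1 g)) - scal (psign b) ((dx ^^ n) (Db1 (Xf b f g)))
            + scal (of_nat n + 1/2) (dx f \<star> (dx ^^ n) (Db1 g)) - scal (1/2) (Db1 (Db2 f) \<star> (dx ^^ n) (Db2 g))"
      unfolding k1 Erem_def by (simp add: scal_distrib(1,2,3) algebra_simps)
  qed
qed

lemma in_D_R2:
  assumes f: "smooth_sf f" "has_parity b f"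
  shows "in_D (2 * n) (\<lambda>g. Xf b f ((dx ^^ n) (Db2 g)) - scal (psign b) ((dx ^^ n) (Db2 (Xf b f g)))
            + scal (of_nat n + 1/2) (dx f \<star> (dx ^^ n) (Db2 g)) + scal (1/2) (Db1 (Db2 f) \<star> (dx ^^ n) (Db1 g)))"
proof -
  have E: "in_D (2 * n) (\<lambda>g. Erem b f n (Db2 g))" by (rule in_D_Erem_comp[OF f(1) in_D_Db2]) simp
  have L1: "in_D (2 * n) (\<lambda>g. (dx ^^ n) (dx f \<star> Db2 g) - dx f \<star> (dx ^^ n) (Db2 g))"
    by (rule in_D_LBn) (use f in \<open>auto intro: in_D_Db2\<close>)
  have L2: "in_D (2 * n) (\<lambda>g. (dx ^^ n) (Db1 (Db2 f) \<star> Db1 g) - Db1 (Db2 f) \<star> (dx ^^ n) (Db1 g))"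
    by (rule in_D_LBn) (use f in \<open>auto intro: in_D_Db1\<close>)
  have "in_D (2 * n) (\<lambda>g. - Erem b f n (Db2 g)
      - scal (1/2) ((dx ^^ n) (dx f \<star> Db2 g) - dx f \<star> (dx ^^ n) (Db2 g))
      - scal (1/2) ((dx ^^ n) (Db1 (Db2 f) \<star> Db1 g) - Db1 (Db2 f) \<star> (dx ^^ n) (Db1 g)))"
    by (rule in_D_diff[OF in_D_diff[OF in_D_uminus[OF E] in_D_scal[OF L1]] in_D_scal[OF L2]])
  then show ?thesis
  proof (rule in_D_cong)
    fix g assume g: "smooth_sf g"
    have k1: "scal (psign b) ((dx ^^ n) (Db2 (Xf b f g))) = (dx ^^ n) (Xf b f (Db2 g))
        + (scal (1/2) ((dx ^^ n) (dx f \<star> Db2 g)) + scal (1/2) ((dx ^^ n) (Db1 (Db2 f) \<star> Db1 g)))"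
    proof -
      have "scal (psign b) ((dx ^^ n) (Db2 (Xf b f g))) = (dx ^^ n) (scal (psign b) (Db2 (Xf b f g)))"
        using f g by (simp add: dxpow_scal_rev)
      also have "\<dots> = (dx ^^ n) (Xf b f (Db2 g) + Q2 f g)" using f g by (simp add: XD2)
      also have "\<dots> = (dx ^^ n) (Xf b f (Db2 g)) + (scal (1/2) ((dx ^^ n) (dx f \<star> Db2 g)) + scal (1/2) ((dx ^^ n) (Db1 (Db2 f) \<star> Db1 g)))"
        using f g by (simp add: Q2_def dxpow_lin)
      finally show ?thesis .
    qed
    show "- Erem b f n (Db2 g)
      - scal (1/2) ((dx ^^ n) (dx f \<star> Db2 g) - dx f \<star> (dx ^^ n) (Db2 g))
      - scal (1/2) ((dx ^^ n) (Db1 (Db2 f) \<star> Db1 g) - Db1 (Db2 f) \<star> (dx ^^ n) (Db1 g))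
      = Xf b f ((dx ^^ n) (Db2 g)) - scal (psign b) ((dx ^^ n) (Db2 (Xf b f g)))
            + scal (of_nat n + 1/2) (dx f \<star> (dx ^^ n) (Db2 g)) + scal (1/2) (Db1 (Db2 f) \<star> (dx ^^ n) (Db1 g))"
      unfolding k1 Erem_def by (simp add: scal_distrib(1,2,3) algebra_simps)
  qed
qed

lemma in_D_R3_1:
  assumes f: "smooth_sf f" "has_parity b f"
  shows "in_D (2 * n) (\<lambda>g. scal (psign b) ((dx ^^ n) (Db1 (dx f \<star> g))) - dx f \<star> (dx ^^ n) (Db1 g))"
proof -
  have a: "in_D (2 * n) (\<lambda>g. (dx ^^ n) (Db1 (dx f) \<star> g))"
    using in_D_comp[OF in_D_mon1[of 0 0 n "2*n"] in_D_mul[of "Db1 (dx f)" 0]] f by (simp add: mono_op_def)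
  have L: "in_D (2 * n) (\<lambda>g. (dx ^^ n) (dx f \<star> Db1 g) - dx f \<star> (dx ^^ n) (Db1 g))"
    by (rule in_D_LBn) (use f in \<open>auto intro: in_D_Db1\<close>)
  have "in_D (2 * n) (\<lambda>g. scal (psign b) ((dx ^^ n) (Db1 (dx f) \<star> g)) + ((dx ^^ n) (dx f \<star> Db1 g) - dx f \<star> (dx ^^ n) (Db1 g)))"
    by (rule in_D_add[OF in_D_scal[OF a] L])
  then show ?thesis
  proof (rule in_D_cong)
    fix g assume g: "smooth_sf g"
    have "Db1 (dx f \<star> g) = Db1 (dx f) \<star> g + scal (psign b) (dx f \<star> Db1 g)"
      using f g by (simp add: Db_rules sinv_par[OF par_dx[OF f(2)]] gm_scal)
    then show "scal (psign b) ((dx ^^ n) (Db1 (dx f) \<star> g)) + ((dx ^^ n) (dx f \<star> Db1 g) - dx f \<star> (dx ^^ n) (Db1 g))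
        = scal (psign b) ((dx ^^ n) (Db1 (dx f \<star> g))) - dx f \<star> (dx ^^ n) (Db1 g)"
      using f g by (simp add: dxpow_lin scal_distrib(1))
  qed
qed

lemma in_D_R3_2:
  assumes f: "smooth_sf f" "has_parity b f"
  shows "in_D (2 * n) (\<lambda>g. scal (psign b) ((dx ^^ n) (Db2 (dx f \<star> g))) - dx f \<star> (dx ^^ n) (Db2 g))"
proof -
  have a: "in_D (2 * n) (\<lambda>g. (dx ^^ n) (Db2 (dx f) \<star> g))"
    using in_D_comp[OF in_D_mon1[of 0 0 n "2*n"] in_D_mul[of "Db2 (dx f)" 0]] f by (simp add: mono_op_def)
  have L: "in_D (2 * n) (\<lambda>g. (dx ^^ n) (dx f \<star> Db2 g) - dx f \<star> (dx ^^ n) (Db2 g))"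
    by (rule in_D_LBn) (use f in \<open>auto intro: in_D_Db2\<close>)
  have "in_D (2 * n) (\<lambda>g. scal (psign b) ((dx ^^ n) (Db2 (dx f) \<star> g)) + ((dx ^^ n) (dx f \<star> Db2 g) - dx f \<star> (dx ^^ n) (Db2 g)))"
    by (rule in_D_add[OF in_D_scal[OF a] L])
  then show ?thesis
  proof (rule in_D_cong)
    fix g assume g: "smooth_sf g"
    have "Db2 (dx f \<star> g) = Db2 (dx f) \<star> g + scal (psign b) (dx f \<star> Db2 g)"
      using f g by (simp add: Db_rules sinv_par[OF par_dx[OF f(2)]] gm_scal)
    then show "scal (psign b) ((dx ^^ n) (Db2 (dx f) \<star> g)) + ((dx ^^ n) (dx f \<star> Db2 g) - dx f \<star> (dx ^^ n) (Db2 g))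
        = scal (psign b) ((dx ^^ n) (Db2 (dx f \<star> g))) - dx f \<star> (dx ^^ n) (Db2 g)"
      using f g by (simp add: dxpow_lin scal_distrib(1))
  qed
qed

lemma Lp_mono:
  assumes f: "smooth_sf f" "has_parity b f" and mn: "m < 2" "n < 2" and c: "smooth_sf c" and g: "smooth_sf g"
  shows "Lp lam mu b f (\<lambda>g. c \<star> mono_op l m n g) g = Lw mu b f c \<star> mono_op l m n g
     + cb b c \<star> (Xf b f (mono_op l m n g) - scal (psign (b \<and> odd (m + n))) (mono_op l m n (Xf b f g)))
     - cb b c \<star> scal (psign (b \<and> odd (m + n)) * lam) (mono_op l m n (dx f \<star> g))"
proof -
  let ?s = "psign (b \<and> odd (m + n))"
  let ?M = "mono_op l m n"
  have tw: "tw b (\<lambda>g. c \<star> ?M g) k = cb b c \<star> scal ?s (?M k)" if k: "smooth_sf k" for k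
    using sinv_mono[OF k mn, of l] by (cases b) (simp_all add: tw_def cb_def inv_rules psign_def)
  have g2: "smooth_sf (dx f \<star> g)" "smooth_sf (Xf b f g)" using f g by auto
  have "Lp lam mu b f (\<lambda>g. c \<star> ?M g) g = (Lw mu b f c \<star> ?M g + cb b c \<star> Xf b f (?M g))
      - cb b c \<star> scal ?s (?M (Xf b f g) + scal lam (?M (dx f \<star> g)))"
    unfolding Lp_def using f g c g2
    by (simp add: tw Lw_gmul mono_lin Lw_Xf[of lam b f g])
  also have "\<dots> = (Lw mu b f c \<star> ?M g + cb b c \<star> Xf b f (?M g))
      - (cb b c \<star> scal ?s (?M (Xf b f g)) + cb b c \<star> scal (?s * lam) (?M (dx f \<star> g)))"
    by (simp add: scal_distrib(1) gm_distrib)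
  finally show ?thesis by (simp add: gm_distrib algebra_simps)
qed

lemma cb_comm:
  assumes "has_parity b f"
  shows "cb b F \<star> (dx f \<star> x) = dx f \<star> (F \<star> x)" "cb b F \<star> (Db1 (Db2 f) \<star> x) = Db1 (Db2 f) \<star> (F \<star> x)"
  using gcomm[OF par_dx[OF assms], of F] gcomm[OF par_D12[OF assms], of F] by (simp_all add: gm_assoc[symmetric])

lemma PL1:
  assumes f: "smooth_sf f" "has_parity b f" and F: "smooth_sf F"
  shows "in_D (2 * n) (\<lambda>g. Lp lam mu b f (\<lambda>g. F \<star> (dx ^^ n) (Db1 g)) g
     - (Lw (mu - lam - (of_nat n + 1/2)) b f F \<star> (dx ^^ n) (Db1 g)
        + scal (1/2) (Db1 (Db2 f) \<star> F) \<star> (dx ^^ n) (Db2 g)))"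
proof -
  have "in_D (2 * n) (\<lambda>g. cb b F \<star>
     ((Xf b f ((dx ^^ n) (Db1 g)) - scal (psign b) ((dx ^^ n) (Db1 (Xf b f g)))
            + scal (of_nat n + 1/2) (dx f \<star> (dx ^^ n) (Db1 g)) - scal (1/2) (Db1 (Db2 f) \<star> (dx ^^ n) (Db2 g)))
      - scal lam (scal (psign b) ((dx ^^ n) (Db1 (dx f \<star> g))) - dx f \<star> (dx ^^ n) (Db1 g))))"
    by (rule in_D_lmul[OF in_D_diff[OF in_D_R1[OF f] in_D_scal[OF in_D_R3_1[OF f]]]]) (use F in simp)
  then show ?thesis
  proof (rule in_D_cong)
    fix g assume g: "smooth_sf g"
    have mono: "mono_op n 1 0 g = (dx ^^ n) (Db1 g)" "mono_op n (Suc 0) 0 g = (dx ^^ n) (Db1 g)" for g by (simp_all add: mono_op_def)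
    have "Lp lam mu b f (\<lambda>g. F \<star> (dx ^^ n) (Db1 g)) g = Lp lam mu b f (\<lambda>g. F \<star> mono_op n 1 0 g) g"
      by (simp add: mono)
    also have "\<dots> = Lw mu b f F \<star> (dx ^^ n) (Db1 g)
     + cb b F \<star> (Xf b f ((dx ^^ n) (Db1 g)) - scal (psign b) ((dx ^^ n) (Db1 (Xf b f g))))
     - cb b F \<star> scal (psign b * lam) ((dx ^^ n) (Db1 (dx f \<star> g)))"
      using Lp_mono[OF f _ _ F g, of 1 0 lam mu n] by (simp add: mono)
    finally have e: "Lp lam mu b f (\<lambda>g. F \<star> (dx ^^ n) (Db1 g)) g = \<dots>" .
    show "cb b F \<star>
     ((Xf b f ((dx ^^ n) (Db1 g)) - scal (psign b) ((dx ^^ n) (Db1 (Xf b f g)))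
            + scal (of_nat n + 1/2) (dx f \<star> (dx ^^ n) (Db1 g)) - scal (1/2) (Db1 (Db2 f) \<star> (dx ^^ n) (Db2 g)))
      - scal lam (scal (psign b) ((dx ^^ n) (Db1 (dx f \<star> g))) - dx f \<star> (dx ^^ n) (Db1 g)))
      = Lp lam mu b f (\<lambda>g. F \<star> (dx ^^ n) (Db1 g)) g
     - (Lw (mu - lam - (of_nat n + 1/2)) b f F \<star> (dx ^^ n) (Db1 g)
        + scal (1/2) (Db1 (Db2 f) \<star> F) \<star> (dx ^^ n) (Db2 g))"
      unfolding e using f
      by (simp add: Lw_Xf gm_distrib gm_scal gm_assoc cb_comm scal_distrib(1,2,3) scal_diff algebra_simps)
  qed
qed

lemma PL2:
  assumes f: "smooth_sf f" "has_parity b f" and F: "smooth_sf F"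
  shows "in_D (2 * n) (\<lambda>g. Lp lam mu b f (\<lambda>g. F \<star> (dx ^^ n) (Db2 g)) g
     - (Lw (mu - lam - (of_nat n + 1/2)) b f F \<star> (dx ^^ n) (Db2 g)
        - scal (1/2) (Db1 (Db2 f) \<star> F) \<star> (dx ^^ n) (Db1 g)))"
proof -
  have "in_D (2 * n) (\<lambda>g. cb b F \<star>
     ((Xf b f ((dx ^^ n) (Db2 g)) - scal (psign b) ((dx ^^ n) (Db2 (Xf b f g)))
            + scal (of_nat n + 1/2) (dx f \<star> (dx ^^ n) (Db2 g)) + scal (1/2) (Db1 (Db2 f) \<star> (dx ^^ n) (Db1 g)))
      - scal lam (scal (psign b) ((dx ^^ n) (Db2 (dx f \<star> g))) - dx f \<star> (dx ^^ n) (Db2 g))))"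
    by (rule in_D_lmul[OF in_D_diff[OF in_D_R2[OF f] in_D_scal[OF in_D_R3_2[OF f]]]]) (use F in simp)
  then show ?thesis
  proof (rule in_D_cong)
    fix g assume g: "smooth_sf g"
    have mono: "mono_op n 0 1 g = (dx ^^ n) (Db2 g)" "mono_op n 0 (Suc 0) g = (dx ^^ n) (Db2 g)" for g
      by (simp_all add: mono_op_def)
    have "Lp lam mu b f (\<lambda>g. F \<star> (dx ^^ n) (Db2 g)) g = Lp lam mu b f (\<lambda>g. F \<star> mono_op n 0 1 g) g"
      by (simp add: mono)
    also have "\<dots> = Lw mu b f F \<star> (dx ^^ n) (Db2 g)
     + cb b F \<star> (Xf b f ((dx ^^ n) (Db2 g)) - scal (psign b) ((dx ^^ n) (Db2 (Xf b f g))))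
     - cb b F \<star> scal (psign b * lam) ((dx ^^ n) (Db2 (dx f \<star> g)))"
      using Lp_mono[OF f _ _ F g, of 0 1 lam mu n] by (simp add: mono)
    finally have e: "Lp lam mu b f (\<lambda>g. F \<star> (dx ^^ n) (Db2 g)) g = \<dots>" .
    show "cb b F \<star>
     ((Xf b f ((dx ^^ n) (Db2 g)) - scal (psign b) ((dx ^^ n) (Db2 (Xf b f g)))
            + scal (of_nat n + 1/2) (dx f \<star> (dx ^^ n) (Db2 g)) + scal (1/2) (Db1 (Db2 f) \<star> (dx ^^ n) (Db1 g)))
      - scal lam (scal (psign b) ((dx ^^ n) (Db2 (dx f \<star> g))) - dx f \<star> (dx ^^ n) (Db2 g)))
      = Lp lam mu b f (\<lambda>g. F \<star> (dx ^^ n) (Db2 g)) g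
     - (Lw (mu - lam - (of_nat n + 1/2)) b f F \<star> (dx ^^ n) (Db2 g)
        - scal (1/2) (Db1 (Db2 f) \<star> F) \<star> (dx ^^ n) (Db1 g))"
      unfolding e using f
      by (simp add: Lw_Xf gm_distrib gm_scal gm_assoc cb_comm scal_distrib(1,2,3) scal_diff algebra_simps)
  qed
qed

theorem proposition3p6:
  fixes lam mu :: complex and n :: nat and b :: bool
    and f F1 F2 :: sfun and A :: "sfun \<Rightarrow> sfun"
  assumes "smooth_sf f" and "has_parity b f"
    and "smooth_sf F1" and "smooth_sf F2"
    and "in_D (2 * n) (\<lambda>g. A g - (F1 \<star> (dx ^^ n) (Db1 g) + F2 \<star> (dx ^^ n) (Db2 g)))"
  shows "in_D (2 * n) (\<lambda>g. Lop lam mu b f A g -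
           ((Lw (mu - lam - (of_nat n + 1/2)) b f F1 - scal (1/2) (Db1 (Db2 f) \<star> F2))
               \<star> (dx ^^ n) (Db1 g)
          + (Lw (mu - lam - (of_nat n + 1/2)) b f F2 + scal (1/2) (Db1 (Db2 f) \<star> F1))
               \<star> (dx ^^ n) (Db2 g)))"
proof -
  note f = assms(1,2)
  define B where "B g = A g - (F1 \<star> (dx ^^ n) (Db1 g) + F2 \<star> (dx ^^ n) (Db2 g))" for g
  have B: "in_D (2 * n) B" using assms(5) by (simp add: B_def[abs_def])
  have P1: "in_D (2 * n + 1) (\<lambda>g. F1 \<star> (dx ^^ n) (Db1 g))"
    using in_D_monomial[of 1 0 n "2 * n + 1" F1] assms(3) by (simp add: mono_op_def)
  have P2: "in_D (2 * n + 1) (\<lambda>g. F2 \<star> (dx ^^ n) (Db2 g))"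
    using in_D_monomial[of 0 1 n "2 * n + 1" F2] assms(4) by (simp add: mono_op_def)
  have B1: "in_D (2 * n + 1) B" using in_D_mono[OF B] by simp
  have A: "in_D (2 * n + 1) (\<lambda>g. B g + (F1 \<star> (dx ^^ n) (Db1 g) + F2 \<star> (dx ^^ n) (Db2 g)))"
    by (rule in_D_add[OF B1 in_D_add[OF P1 P2]])
  have A': "in_D (2 * n + 1) A" by (rule in_D_cong[OF A]) (simp add: B_def)
  let ?nu = "mu - lam - (of_nat n + 1/2)"
  have "in_D (2 * n) (\<lambda>g. Lop lam mu b f B g
     + (Lp lam mu b f (\<lambda>g. F1 \<star> (dx ^^ n) (Db1 g)) g
        - (Lw ?nu b f F1 \<star> (dx ^^ n) (Db1 g) + scal (1/2) (Db1 (Db2 f) \<star> F1) \<star> (dx ^^ n) (Db2 g)))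
     + (Lp lam mu b f (\<lambda>g. F2 \<star> (dx ^^ n) (Db2 g)) g
        - (Lw ?nu b f F2 \<star> (dx ^^ n) (Db2 g) - scal (1/2) (Db1 (Db2 f) \<star> F2) \<star> (dx ^^ n) (Db1 g))))"
    by (rule in_D_add[OF in_D_add[OF in_D_Lop[OF B f] PL1[OF f assms(3)]] PL2[OF f assms(4)]])
  then show ?thesis
  proof (rule in_D_cong)
    fix g assume g: "smooth_sf g"
    have "Lop lam mu b f A g = Lp lam mu b f A g" by (rule Lop_Lp[OF A' assms(1) g])
    also have "\<dots> = Lp lam mu b f (\<lambda>g. B g + (F1 \<star> (dx ^^ n) (Db1 g) + F2 \<star> (dx ^^ n) (Db2 g))) g"
      by (rule Lp_cong) (simp_all add: B_def assms(1) g)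
    also have "\<dots> = Lp lam mu b f B g + Lp lam mu b f (\<lambda>g. F1 \<star> (dx ^^ n) (Db1 g) + F2 \<star> (dx ^^ n) (Db2 g)) g"
      by (rule Lp_add[OF B1 in_D_add[OF P1 P2] assms(1) g])
    also have "Lp lam mu b f (\<lambda>g. F1 \<star> (dx ^^ n) (Db1 g) + F2 \<star> (dx ^^ n) (Db2 g)) g
       = Lp lam mu b f (\<lambda>g. F1 \<star> (dx ^^ n) (Db1 g)) g + Lp lam mu b f (\<lambda>g. F2 \<star> (dx ^^ n) (Db2 g)) g"
      by (rule Lp_add[OF P1 P2 assms(1) g])
    also have "Lp lam mu b f B g = Lop lam mu b f B g" by (rule Lop_Lp[OF B assms(1) g, symmetric])
    finally have e: "Lop lam mu b f A g = Lop lam mu b f B g + (Lp lam mu b f (\<lambda>g. F1 \<star> (dx ^^ n) (Db1 g)) g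
       + Lp lam mu b f (\<lambda>g. F2 \<star> (dx ^^ n) (Db2 g)) g)" .
    show "Lop lam mu b f B g
     + (Lp lam mu b f (\<lambda>g. F1 \<star> (dx ^^ n) (Db1 g)) g
        - (Lw ?nu b f F1 \<star> (dx ^^ n) (Db1 g) + scal (1/2) (Db1 (Db2 f) \<star> F1) \<star> (dx ^^ n) (Db2 g)))
     + (Lp lam mu b f (\<lambda>g. F2 \<star> (dx ^^ n) (Db2 g)) g
        - (Lw ?nu b f F2 \<star> (dx ^^ n) (Db2 g) - scal (1/2) (Db1 (Db2 f) \<star> F2) \<star> (dx ^^ n) (Db1 g)))
     = Lop lam mu b f A g -
           ((Lw ?nu b f F1 - scal (1/2) (Db1 (Db2 f) \<star> F2)) \<star> (dx ^^ n) (Db1 g)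
          + (Lw ?nu b f F2 + scal (1/2) (Db1 (Db2 f) \<star> F1)) \<star> (dx ^^ n) (Db2 g))"
      unfolding e by (simp add: gm_distrib algebra_simps)
  qed
qed

end
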